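(* For every $2$-tag system $T=(V,\phi)$ with halting symbol $H$ there exists an ANEPFC $\Gamma$ whose underlying graph is the complete graph on $10$ nodes (so $\Gamma$ has size $10$), with input alphabet $V\setminus\{H\}$, such that the language accepted by $\Gamma$ is $$L_a(\Gamma)=\{w\in (V\setminus\{H\})^*\mid T \text{ halts on } w\}.$$
   Context: A $2$-tag system $T=(V,\phi)$ consists of a finite alphabet $V$ containing a special halting symbol $H$, and a map $\phi:V\setminus\{H\}\to V^+$ such that for each $x$ either $|\phi(x)|\ge 2$ or $\phi(x)=H$, and $\phi(x)=H$ for exactly one $x\in V\setminus\{H\}$. A halting word is a word containing $H$ or of length less than $2$. On non-halting words the tag operation $t_T$ is defined by: if $x$ is the leftmost symbol of $w$, then $t_T(w)$ is obtained by deleting the leftmost two symbols of $w$ and appending $\phi(x)$ at the right end. $T$ halts on $w$ if iterating $t_T$ starting from $w$ produces a halting word after finitely many steps. Evolutionary rules over an alphabet $U$: a substitution rule $a\to b$ ($a,b\in U$, $a\ne b$), a deletion rule $a\to\varepsilon$, an insertion rule $\varepsilon\to a$. For a rule $\sigma$ and a word $w$, with action mode $\alpha\in\{*,l,r\}$: a substitution $a\to b$ yields $\{ubv: w=uav\}$ (or $\{w\}$ if $a$ does not occur), for every mode; a deletion $a\to\varepsilon$ yields in mode $*$ the set $\{uv:w=uav\}$, in mode $r$ the set $\{u: w=ua\}$, in mode $l$ the set $\{v:w=av\}$ (each being $\{w\}$ if empty); an insertion $\varepsilon\to a$ yields in mode $*$ $\{uav: w=uv\}$, in mode $r$ $\{wa\}$,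 in mode $l$ $\{aw\}$. For a set of rules $M$ and language $L$, $M^\alpha(L)=\bigcup_{w\in L}\bigcup_{\sigma\in M}\sigma^\alpha(w)$. Filters: for disjoint $P,F\subseteq U$ and a word $x$, $\varphi^s(x;P,F)$ holds iff $P\subseteq alph(x)$ and $F\cap alph(x)=\emptyset$; $\varphi^w(x;P,F)$ holds iff $alph(x)\cap P\ne\emptyset$ and $F\cap alph(x)=\emptyset$, where $alph(x)$ is the set of symbols occurring in $x$. For a language $L$, $\varphi^\beta(L,P,F)=\{x\in L\mid\varphi^\beta(x;P,F)\}$. An accepting network of evolutionary processors with filtered connections (ANEPFC) is $\Gamma=(V,U,G,\mathcal R,\mathcal N,\alpha,\beta,x_I,x_O)$ where $V\subseteq U$ are the input and network alphabets; $G=(X_G,E_G)$ is an undirected loopless graph; $\mathcal R$ assigns to each node a set of rules all of one type (all substitutions, all deletions, or all insertions) over $U$; $\mathcal N$ assigns to each edge $e$ a pair $(P_e,F_e)$ of disjoint subsets of $U$; $\alpha:X_G\to\{*,l,r\}$; $\beta:E_G\to\{s,w\}$; $x_I,x_O\in X_G$ are the input and output nodes. The size of $\Gamma$ is $|X_G|$. A configuration maps each node to a set of words; the initial configuration on input $w\in V^*$ puts $\{w\}$ at $x_I$ and $\emptyset$ elsewhere. In an evolutionary step, $C'(x)=(\mathcal R(x))^{\alpha(x)}(C(x))$ for every node $x$. In a communication step, each node sends (and keeps no copy of) every word it holds that passes the filter $\varphi^{\beta(e)}(\cdot,P_e,F_e)$ of an incident edge $e$ to the neighbour across that edge, and receives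 all words from neighbours passing the corresponding edge filters; i.e. $C'(x)=\big(C(x)\setminus\bigcup_{\{x,y\}\in E_G}\varphi^{\beta(\{x,y\})}(C(x),\mathcal N(\{x,y\}))\big)\cup\bigcup_{\{x,y\}\in E_G}\varphi^{\beta(\{x,y\})}(C(y),\mathcal N(\{x,y\}))$. A computation on $z$ alternates evolutionary and communication steps starting with an evolutionary step from the initial configuration. It halts if some configuration has a nonempty set of words at $x_O$ (an accepting computation), or if two identical configurations are obtained in consecutive evolutionary steps or in consecutive communication steps. $L_a(\Gamma)$ is the set of $z\in V^*$ whose computation is accepting. *)

theory Defs
  imports Main
begin

definition tag_system :: "'a set \<Rightarrow> 'a \<Rightarrow> ('a \<Rightarrow> 'a list) \<Rightarrow> bool" where
  "tag_system V H phi \<longleftrightarrow> finite V \<and> H \<in> V \<and>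
     (\<forall>x \<in> V - {H}. phi x \<noteq> [] \<and> set (phi x) \<subseteq> V \<and>
        (2 \<le> length (phi x) \<or> phi x = [H])) \<and>
     (\<exists>!x. x \<in> V - {H} \<and> phi x = [H])"

definition halting_word :: "'a \<Rightarrow> 'a list \<Rightarrow> bool" where
  "halting_word H w \<longleftrightarrow> H \<in> set w \<or> length w < 2"

text \<open>The tag operation (only meaningful on non-halting words).\<close>
definition tag_step :: "('a \<Rightarrow> 'a list) \<Rightarrow> 'a list \<Rightarrow> 'a list" where
  "tag_step phi w = drop 2 w @ phi (hd w)"

definition tag_halts :: "'a \<Rightarrow> ('a \<Rightarrow> 'a list) \<Rightarrow> 'a list \<Rightarrow> bool" where
  "tag_halts H phi w \<longleftrightarrow> (\<exists>n. halting_word H ((tag_step phi ^^ n) w))"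

datatype 'b rule = Subst 'b 'b | Del 'b | Ins 'b

datatype amode = AStar | ALeft | ARight

datatype fmode = FStrong | FWeak

fun rule_app :: "'b rule \<Rightarrow> amode \<Rightarrow> 'b list \<Rightarrow> 'b list set" where
  "rule_app (Subst a b) m w =
     (if a \<in> set w then {u @ [b] @ v | u v. w = u @ [a] @ v} else {w})"
| "rule_app (Del a) AStar w =
     (if a \<in> set w then {u @ v | u v. w = u @ [a] @ v} else {w})"
| "rule_app (Del a) ARight w =
     (if (\<exists>u. w = u @ [a]) then {u. w = u @ [a]} else {w})"
| "rule_app (Del a) ALeft w =
     (if (\<exists>v. w = a # v) then {v. w = a # v} else {w})"
| "rule_app (Ins a) AStar w = {u @ [a] @ v | u v. w = u @ v}"
| "rule_app (Ins a) ARight w = {w @ [a]}"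
| "rule_app (Ins a) ALeft w = {a # w}"

definition apply_rules :: "'b rule set \<Rightarrow> amode \<Rightarrow> 'b list set \<Rightarrow> 'b list set" where
  "apply_rules M m L = (\<Union>w \<in> L. \<Union>\<sigma> \<in> M. rule_app \<sigma> m w)"

fun rule_syms :: "'b rule \<Rightarrow> 'b set" where
  "rule_syms (Subst a b) = {a, b}"
| "rule_syms (Del a) = {a}"
| "rule_syms (Ins a) = {a}"

fun rule_ok :: "'b rule \<Rightarrow> bool" where
  "rule_ok (Subst a b) = (a \<noteq> b)"
| "rule_ok _ = True"

fun is_subst :: "'b rule \<Rightarrow> bool" where
  "is_subst (Subst _ _) = True" | "is_subst _ = False"
fun is_del :: "'b rule \<Rightarrow> bool" where
  "is_del (Del _) = True" | "is_del _ = False"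
fun is_ins :: "'b rule \<Rightarrow> bool" where
  "is_ins (Ins _) = True" | "is_ins _ = False"

fun filt_word :: "fmode \<Rightarrow> 'b list \<Rightarrow> 'b set \<times> 'b set \<Rightarrow> bool" where
  "filt_word FStrong x (P, F) \<longleftrightarrow> P \<subseteq> set x \<and> F \<inter> set x = {}"
| "filt_word FWeak x (P, F) \<longleftrightarrow> set x \<inter> P \<noteq> {} \<and> F \<inter> set x = {}"

definition filt :: "fmode \<Rightarrow> 'b list set \<Rightarrow> 'b set \<times> 'b set \<Rightarrow> 'b list set" where
  "filt \<beta> L PF = {x \<in> L. filt_word \<beta> x PF}"

record 'b anepfc =
  net_alph :: "'b set"
  in_alph :: "'b set"
  nodes :: "nat set"
  edges :: "nat set set"
  rules :: "nat \<Rightarrow> 'b rule set"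
  efilter :: "nat set \<Rightarrow> 'b set \<times> 'b set"
  nmode :: "nat \<Rightarrow> amode"
  emode :: "nat set \<Rightarrow> fmode"
  xin :: nat
  xout :: nat

definition wf_anepfc :: "'b anepfc \<Rightarrow> bool" where
  "wf_anepfc N \<longleftrightarrow>
     finite (net_alph N) \<and> in_alph N \<subseteq> net_alph N \<and>
     finite (nodes N) \<and>
     edges N \<subseteq> {{x, y} | x y. x \<in> nodes N \<and> y \<in> nodes N \<and> x \<noteq> y} \<and>
     xin N \<in> nodes N \<and> xout N \<in> nodes N \<and>
     (\<forall>x \<in> nodes N.
        (\<forall>r \<in> rules N x. rule_ok r \<and> rule_syms r \<subseteq> net_alph N) \<and>
        ((\<forall>r \<in> rules N x. is_subst r) \<or> (\<forall>r \<in> rules N x. is_del r) \<or>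
         (\<forall>r \<in> rules N x. is_ins r))) \<and>
     (\<forall>e \<in> edges N. fst (efilter N e) \<subseteq> net_alph N \<and> snd (efilter N e) \<subseteq> net_alph N \<and>
        fst (efilter N e) \<inter> snd (efilter N e) = {})"

definition complete_graph_size :: "'b anepfc \<Rightarrow> nat \<Rightarrow> bool" where
  "complete_graph_size N k \<longleftrightarrow> card (nodes N) = k \<and> finite (nodes N) \<and>
     edges N = {{x, y} | x y. x \<in> nodes N \<and> y \<in> nodes N \<and> x \<noteq> y}"

type_synonym 'b config = "nat \<Rightarrow> 'b list set"

definition init_config :: "'b anepfc \<Rightarrow> 'b list \<Rightarrow> 'b config" where
  "init_config N z = (\<lambda>x. if x = xin N then {z} else {})"

definition evol_step :: "'b anepfc \<Rightarrow> 'b config \<Rightarrow> 'b config" where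
  "evol_step N C = (\<lambda>x. if x \<in> nodes N then apply_rules (rules N x) (nmode N x) (C x) else C x)"

definition comm_step :: "'b anepfc \<Rightarrow> 'b config \<Rightarrow> 'b config" where
  "comm_step N C = (\<lambda>x.
     (C x - (\<Union>y \<in> {y. {x, y} \<in> edges N}. filt (emode N {x, y}) (C x) (efilter N {x, y})))
     \<union> (\<Union>y \<in> {y. {x, y} \<in> edges N}. filt (emode N {x, y}) (C y) (efilter N {x, y})))"

text \<open>Configuration after n steps: step 2k+1 is evolutionary, step 2k+2 communication.\<close>
fun run :: "'b anepfc \<Rightarrow> 'b list \<Rightarrow> nat \<Rightarrow> 'b config" where
  "run N z 0 = init_config N z"
| "run N z (Suc n) = (if even n then evol_step N (run N z n) else comm_step N (run N z n))"

text \<open>Halting by repetition at step n: the configuration produced by the n-th step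
  equals the one produced by the previous step of the same kind.\<close>
definition repeat_halt :: "'b anepfc \<Rightarrow> 'b list \<Rightarrow> nat \<Rightarrow> bool" where
  "repeat_halt N z n \<longleftrightarrow> 3 \<le> n \<and> run N z n = run N z (n - 2)"

definition accepting :: "'b anepfc \<Rightarrow> 'b list \<Rightarrow> bool" where
  "accepting N z \<longleftrightarrow> (\<exists>n. run N z n (xout N) \<noteq> {} \<and> (\<forall>m < n. \<not> repeat_halt N z m))"

definition accepted_lang :: "'b anepfc \<Rightarrow> 'b list set" where
  "accepted_lang N = {z \<in> lists (in_alph N). accepting N z}"

end

theory Submission
  imports Defs "HOL-Library.Countable" "HOL-Library.Nat_Bijection"
begin


lemma run_shift:
  assumes "3 \<le> m" "run N z m = run N z (m - 2)"
  shows "run N z (m + k) = run N z (m - 2 + k)"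
proof (induction k)
  case 0 then show ?case using assms by simp
next
  case (Suc k)
  have mk: "m + k = (m - 2 + k) + 2" using assms(1) by simp
  have e: "even (m + k) = even (m - 2 + k)" by (subst mk) simp
  have "run N z (m + Suc k) = run N z (Suc (m + k))" by simp
  also have "\<dots> = run N z (Suc (m - 2 + k))" using Suc e by simp
  also have "\<dots> = run N z (m - 2 + Suc k)" by simp
  finally show ?case .
qed

lemma accepting_iff: "accepting N z \<longleftrightarrow> (\<exists>n. run N z n (xout N) \<noteq> {})"
proof
  assume "\<exists>n. run N z n (xout N) \<noteq> {}"
  define n where "n = (LEAST n. run N z n (xout N) \<noteq> {})"
  have n1: "run N z n (xout N) \<noteq> {}" unfolding n_def
    by (rule LeastI_ex) fact
  have n2: "\<And>j. j < n \<Longrightarrow> run N z j (xout N) = {}" unfolding n_def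
    using not_less_Least by blast
  have "\<forall>m<n. \<not> repeat_halt N z m"
  proof (intro allI impI notI)
    fix m assume mn: "m < n" and r: "repeat_halt N z m"
    hence m3: "3 \<le> m" and eq: "run N z m = run N z (m - 2)" by (auto simp: repeat_halt_def)
    have "run N z (m + (n - m)) = run N z (m - 2 + (n - m))" by (rule run_shift[OF m3 eq])
    hence "run N z n = run N z (n - 2)" using mn m3 by (simp add: algebra_simps)
    moreover have "run N z (n - 2) (xout N) = {}" using n2 mn m3 by simp
    ultimately show False using n1 by simp
  qed
  thus "accepting N z" using n1 unfolding accepting_def by blast
qed (auto simp: accepting_def)

lemma ev_step:
  assumes "even n" "w \<in> run N z n p" "p \<in> nodes N"
    "\<sigma> \<in> rules N p" "w' \<in> rule_app \<sigma> (nmode N p) w"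
  shows "w' \<in> run N z (Suc n) p"
  using assms by (auto simp: evol_step_def apply_rules_def)

lemma cm_step:
  assumes "odd n" "w \<in> run N z n p" "{p,q} \<in> edges N"
    "filt_word (emode N {p,q}) w (efilter N {p,q})"
  shows "w \<in> run N z (Suc n) q"
proof -
  have "{q,p} \<in> edges N" using assms(3) by (simp add: insert_commute)
  moreover have "filt_word (emode N {q,p}) w (efilter N {q,p})" using assms(4) by (simp add: insert_commute)
  ultimately show ?thesis using assms(1,2)
    by (auto simp: comm_step_def filt_def)
qed

lemma run_inv:
  fixes IE IC :: "nat \<Rightarrow> 'b list \<Rightarrow> bool"
  assumes init: "IE (xin N) z"
    and inn: "\<And>p w. IE p w \<Longrightarrow> p \<in> nodes N"
    and ev: "\<And>p w \<sigma> w'. IE p w \<Longrightarrow> \<sigma> \<in> rules N p \<Longrightarrow> w' \<in> rule_app \<sigma> (nmode N p) w \<Longrightarrow> IC p w'"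
    and stay: "\<And>p w. IC p w \<Longrightarrow> (\<forall>y. {p,y} \<in> edges N \<longrightarrow> \<not> filt_word (emode N {p,y}) w (efilter N {p,y})) \<Longrightarrow> IE p w"
    and mv: "\<And>p q w. IC p w \<Longrightarrow> {p,q} \<in> edges N \<Longrightarrow> filt_word (emode N {p,q}) w (efilter N {p,q}) \<Longrightarrow> IE q w"
  shows "w \<in> run N z n p \<Longrightarrow> (if even n then IE p w else IC p w)"
proof (induction n arbitrary: p w)
  case 0
  then show ?case using init by (auto simp: init_config_def split: if_splits)
next
  case (Suc n)
  show ?case
  proof (cases "even n")
    case True
    then obtain w0 where "w0 \<in> run N z n p" and ex: "(p \<in> nodes N \<and> (\<exists>\<sigma>\<in>rules N p. w \<in> rule_app \<sigma> (nmode N p) w0)) \<or> (p \<notin> nodes N \<and> w = w0)"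
      using Suc.prems by (auto simp: evol_step_def apply_rules_def split: if_splits)
    hence "IE p w0" using Suc.IH True by fastforce
    then show ?thesis using ex True ev inn by auto
  next
    case False
    have IH: "\<And>p w. w \<in> run N z n p \<Longrightarrow> IC p w" using Suc.IH False by fastforce
    from Suc.prems False have "w \<in> comm_step N (run N z n) p" by simp
    then consider (st) "w \<in> run N z n p" "\<forall>y. {p,y} \<in> edges N \<longrightarrow> \<not> filt_word (emode N {p,y}) w (efilter N {p,y})"
      | (mvv) y where "{p,y} \<in> edges N" "w \<in> run N z n y" "filt_word (emode N {p,y}) w (efilter N {p,y})"
      by (auto simp: comm_step_def filt_def)
    then show ?thesis
    proof cases
      case st then show ?thesis using IH stay False by auto
    next
      case mvv
      hence "{y,p} \<in> edges N" "filt_word (emode N {y,p}) w (efilter N {y,p})" by (simp_all add: insert_commute)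
      then show ?thesis using mv IH[OF mvv(2)] False by auto
    qed
  qed
qed



datatype mk = MSB nat | MSBp nat | MSL nat nat | MSLp nat nat | MTT nat | MTTp nat | MJ
instance mk :: countable by countable_datatype

definition sy :: "mk \<Rightarrow> 'a + nat" where "sy m = Inr (to_nat m)"

lemma sy_eq[simp]: "sy a = sy b \<longleftrightarrow> a = b" "sy a \<noteq> Inl x" "Inl x \<noteq> sy a"
  by (auto simp: sy_def)

lemma sy_notin_Inl[simp]: "sy m \<notin> Inl ` A" "Inl a \<notin> sy ` B"
  by (auto simp: sy_def)

lemma ball_Inl[simp]: "(\<forall>s\<in>Inl ` A. Q s) \<longleftrightarrow> (\<forall>a\<in>A. Q (Inl a))" by auto
lemma bex_Inl[simp]: "(\<exists>s\<in>Inl ` A. Q s) \<longleftrightarrow> (\<exists>a\<in>A. Q (Inl a))" by auto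

datatype skind = KB | KL nat

definition Ssym :: "skind \<Rightarrow> bool \<Rightarrow> nat \<Rightarrow> 'a + nat" where
  "Ssym k p n = sy (case k of KB \<Rightarrow> (if p then MSBp n else MSB n) | KL c \<Rightarrow> (if p then MSLp c n else MSL c n))"
definition Tsym :: "bool \<Rightarrow> nat \<Rightarrow> 'a + nat" where
  "Tsym p m = sy (if p then MTTp m else MTT m)"

abbreviation L :: "'a list \<Rightarrow> ('a + nat) list" where "L \<equiv> map Inl"

definition cw :: "skind \<Rightarrow> 'a list \<Rightarrow> 'a list \<Rightarrow> nat \<Rightarrow> nat \<Rightarrow> bool \<Rightarrow> bool \<Rightarrow> ('a + nat) list" where
  "cw k \<alpha> \<beta> n m ps pt = L \<alpha> @ Ssym k ps n # L \<beta> @ [Tsym pt m]"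

lemma filt_weak: "filt_word FWeak w (P, F) \<longleftrightarrow> (\<exists>s\<in>set w. s \<in> P) \<and> (\<forall>s\<in>set w. s \<notin> F)"
  by auto
lemma filt_strong: "filt_word FStrong w (P, F) \<longleftrightarrow> (\<forall>s\<in>P. s \<in> set w) \<and> (\<forall>s\<in>set w. s \<notin> F)"
  by auto

locale tagnet =
  fixes V :: "'a set" and H :: 'a and phi :: "'a \<Rightarrow> 'a list" and code :: "'a \<Rightarrow> nat"
  assumes ts: "tag_system V H phi" and cinj: "inj_on code V"
begin

lemma finV: "finite V" and HV: "H \<in> V"
  using ts by (auto simp: tag_system_def)

lemma phi_props: "x \<in> V - {H} \<Longrightarrow> phi x \<noteq> [] \<and> set (phi x) \<subseteq> V \<and> (2 \<le> length (phi x) \<or> phi x = [H])"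
  using ts by (auto simp: tag_system_def)

lemma VH_ne: "V - {H} \<noteq> {}"
  using ts unfolding tag_system_def by blast

definition Hset where "Hset = {x \<in> V - {H}. H \<in> set (phi x)}"

lemma nonH_props: "x \<in> V - {H} \<Longrightarrow> x \<notin> Hset \<Longrightarrow> 2 \<le> length (phi x) \<and> set (phi x) \<subseteq> V - {H}"
  using phi_props[of x] by (auto simp: Hset_def)

definition e :: "'a \<Rightarrow> nat \<Rightarrow> nat" where "e x i = Suc (prod_encode (code x, i))"

lemma e_inj[simp]: "x \<in> V \<Longrightarrow> y \<in> V \<Longrightarrow> e x i = e y j \<longleftrightarrow> x = y \<and> i = j"
  using cinj by (auto simp: e_def inj_on_def)

lemma e_pos[simp]: "e x i \<noteq> 0" "0 < e x i"
  by (auto simp: e_def)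

definition Emax where "Emax = Max ((\<lambda>(x,i). e x i) ` (SIGMA x:V-{H}. {..length (phi x)}))"

lemma e_le: "x \<in> V - {H} \<Longrightarrow> i \<le> length (phi x) \<Longrightarrow> e x i \<le> Emax"
  unfolding Emax_def
  by (rule Max_ge) (auto intro!: finite_SigmaI simp: finV)

definition okm :: "mk \<Rightarrow> bool" where
  "okm m = (case m of MSB n \<Rightarrow> n \<le> Emax | MSBp n \<Rightarrow> n \<le> Emax | MSL c n \<Rightarrow> c \<in> code ` V \<and> n \<le> Emax
     | MSLp c n \<Rightarrow> c \<in> code ` V \<and> n \<le> Emax | MTT n \<Rightarrow> n \<le> Emax | MTTp n \<Rightarrow> n \<le> Emax | MJ \<Rightarrow> True)"

lemma okm_simps[simp]: "okm (MSB n) = (n \<le> Emax)" "okm (MSBp n) = (n \<le> Emax)"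
  "okm (MSL c n) = (c \<in> code ` V \<and> n \<le> Emax)" "okm (MSLp c n) = (c \<in> code ` V \<and> n \<le> Emax)"
  "okm (MTT n) = (n \<le> Emax)" "okm (MTTp n) = (n \<le> Emax)" "okm MJ"
  by (auto simp: okm_def)

lemma finite_okm: "finite {m. okm m}"
proof -
  have "{m. okm m} \<subseteq> MSB ` {..Emax} \<union> MSBp ` {..Emax} \<union> (\<lambda>(c,n). MSL c n) ` (code ` V \<times> {..Emax})
     \<union> (\<lambda>(c,n). MSLp c n) ` (code ` V \<times> {..Emax}) \<union> MTT ` {..Emax} \<union> MTTp ` {..Emax} \<union> {MJ}"
  proof
    fix m assume "m \<in> {m. okm m}" then show "m \<in> MSB ` {..Emax} \<union> MSBp ` {..Emax} \<union> (\<lambda>(c,n). MSL c n) ` (code ` V \<times> {..Emax})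
     \<union> (\<lambda>(c,n). MSLp c n) ` (code ` V \<times> {..Emax}) \<union> MTT ` {..Emax} \<union> MTTp ` {..Emax} \<union> {MJ}"
      by (cases m) (auto simp: image_iff)
  qed
  moreover have "finite (MSB ` {..Emax} \<union> MSBp ` {..Emax} \<union> (\<lambda>(c,n). MSL c n) ` (code ` V \<times> {..Emax})
     \<union> (\<lambda>(c,n). MSLp c n) ` (code ` V \<times> {..Emax}) \<union> MTT ` {..Emax} \<union> MTTp ` {..Emax} \<union> {MJ})"
    using finV by auto
  ultimately show ?thesis by (rule finite_subset)
qed

definition NA :: "('a + nat) set" where "NA = Inl ` V \<union> sy ` {m. okm m}"

lemma NA_simps[simp]: "sy m \<in> NA \<longleftrightarrow> okm m" "Inl a \<in> NA \<longleftrightarrow> a \<in> V"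
  by (auto simp: NA_def)

lemma finite_NA: "finite NA"
  using finite_okm finV by (simp add: NA_def)

definition cls :: "(mk \<Rightarrow> bool) \<Rightarrow> ('a + nat) set" where "cls P = sy ` {m. okm m \<and> P m}"

lemma cls_mem[simp]: "sy m \<in> cls P \<longleftrightarrow> okm m \<and> P m" "Inl a \<notin> cls P"
  by (auto simp: cls_def)

lemma cls_NA: "cls P \<subseteq> NA"
  by (auto simp: cls_def)

definition Y1p :: "mk \<Rightarrow> bool" where "Y1p m = (\<exists>x\<in>V-{H}. m = MSL (code (phi x ! 0)) (e x 1))"

definition "SBall = cls (\<lambda>m. \<exists>n. m = MSB n)"
definition "SBpos = cls (\<lambda>m. \<exists>n. m = MSB n \<and> 0 < n)"
definition "Sun = cls (\<lambda>m. (\<exists>n. m = MSB n) \<or> (\<exists>c n. m = MSL c n))"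
definition "Spr = cls (\<lambda>m. (\<exists>n. m = MSBp n) \<or> (\<exists>c n. m = MSLp c n))"
definition "Tall = cls (\<lambda>m. \<exists>n. m = MTT n)"
definition "Tpall = cls (\<lambda>m. \<exists>n. m = MTTp n)"
definition "Tpos = cls (\<lambda>m. \<exists>n. m = MTT n \<and> 0 < n)"
definition "JJ = cls (\<lambda>m. m = MJ)"
definition "Y1 = cls Y1p"
definition "SLnY = cls (\<lambda>m. (\<exists>c n. m = MSL c n) \<and> \<not> Y1p m)"
definition "TE0 = cls (\<lambda>m. \<exists>x\<in>V-{H}. m = MTT (e x 0))"
definition "TEpos = cls (\<lambda>m. \<exists>x\<in>V-{H}. \<exists>j. 0 < j \<and> j < length (phi x) \<and> m = MTT (e x j))"
definition "THs = cls (\<lambda>m. \<exists>x\<in>V-{H}. H \<in> set (phi x) \<and> m = MTT (e x 0))"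
definition "T0 = cls (\<lambda>m. m = MTT 0)"
definition "SB0 = cls (\<lambda>m. m = MSB 0)"
definition "NSB = Inl ` V \<union> cls (\<lambda>m. \<forall>n. m \<noteq> MSB n)"

lemmas fsets = SBall_def SBpos_def Sun_def Spr_def Tall_def Tpall_def Tpos_def JJ_def Y1_def
  SLnY_def TE0_def TEpos_def THs_def T0_def SB0_def

definition rMK where "rMK = {Subst (Inl a) (sy (MSB (e a 0))) | a. a \<in> V - {H}}"
definition rIN where "rIN = {Ins (sy MJ)}"
definition rZ where "rZ = {Subst (sy MJ) (sy (MTT 0))}"
definition rDEC where "rDEC = {Subst (sy (MSB n)) (sy (MSBp (n - 1))) | n. 0 < n \<and> n \<le> Emax}
   \<union> {Subst (sy (MSL c n)) (sy (MSLp c (n - 1))) | c n. c \<in> code ` V \<and> 0 < n \<and> n \<le> Emax}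
   \<union> {Subst (sy (MSL (code p) 0)) (Inl p) | p. p \<in> V}"
definition rINC where "rINC = {Subst (sy (MTT m)) (sy (MTTp (Suc m))) | m. m < Emax}"
definition rUNS where "rUNS = {Subst (sy (MSBp n)) (sy (MSB n)) | n. n \<le> Emax}
   \<union> {Subst (sy (MSLp c n)) (sy (MSL c n)) | c n. c \<in> code ` V \<and> n \<le> Emax}"
definition rUNT where "rUNT = {Subst (sy (MTTp m)) (sy (MTT m)) | m. m \<le> Emax}"
definition rDELL where "rDELL = {Del (sy (MSB n)) | n. n \<le> Emax}"
definition rEMIT where "rEMIT = {Subst (sy (MTT (e x i))) (sy (MSL (code (phi x ! i)) (e x (Suc i)))) | x i. x \<in> V - {H} \<and> Suc i < length (phi x)}
   \<union> {Subst (sy (MTT (e x i))) (Inl (phi x ! i)) | x i. x \<in> V - {H} \<and> Suc i = length (phi x)}"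

definition rl :: "nat \<Rightarrow> ('a + nat) rule set" where
  "rl p = (if p = 0 then rMK else if p = 1 then rIN else if p = 2 then rZ else if p = 3 then rDEC
     else if p = 4 then rINC else if p = 5 then rUNS else if p = 6 then rUNT else if p = 7 then rDELL
     else if p = 8 then rEMIT else {})"

definition nm :: "nat \<Rightarrow> amode" where
  "nm p = (if p = 1 then ARight else if p = 7 then ALeft else AStar)"

definition ef :: "nat set \<Rightarrow> ('a + nat) set \<times> ('a + nat) set" where
  "ef E = (if E = {0,1} then (SBall, JJ)
    else if E = {0,8} then (Inl ` V \<union> Y1, SBall \<union> Tall \<union> JJ \<union> Spr \<union> Tpall \<union> SLnY)
    else if E = {0,9} then ({}, NSB)
    else if E = {1,2} then (JJ, {})
    else if E = {1,8} then (SLnY, JJ \<union> Tall \<union> SBall \<union> Y1 \<union> Spr \<union> Tpall)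
    else if E = {2,3} then (T0, JJ \<union> Y1 \<union> Spr \<union> Tpall)
    else if E = {2,7} then (Y1, JJ \<union> Spr \<union> Tpall \<union> Tpos)
    else if E = {3,4} then (Spr, Tpall \<union> JJ)
    else if E = {3,7} then (SB0 \<union> Y1, Spr \<union> Tpall \<union> JJ \<union> SBpos)
    else if E = {3,8} then (TEpos, Sun \<union> Spr \<union> JJ \<union> Tpall)
    else if E = {3,6} then (Sun, Spr \<union> Tpall \<union> JJ \<union> T0)
    else if E = {4,5} then (Tpall, JJ \<union> Sun)
    else if E = {5,6} then (Sun, Spr \<union> JJ \<union> Tall)
    else if E = {7,8} then (TE0, Sun \<union> Spr \<union> JJ \<union> Tpall)
    else if E = {7,9} then (THs, Sun \<union> Spr \<union> JJ \<union> Tpall)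
    else ({}, {}))"

definition em :: "nat set \<Rightarrow> fmode" where "em E = (if E = {0,9} then FStrong else FWeak)"

definition Nd :: "nat set" where "Nd = {0..9}"
definition Ed :: "nat set set" where "Ed = {{x, y} | x y. x \<in> Nd \<and> y \<in> Nd \<and> x \<noteq> y}"

definition Gam :: "('a + nat) anepfc" where
  "Gam = \<lparr>net_alph = NA, in_alph = Inl ` (V - {H}), nodes = Nd, edges = Ed, rules = rl,
     efilter = ef, nmode = nm, emode = em, xin = 0, xout = 9\<rparr>"


lemma r_ok:
  "r \<in> rl p \<Longrightarrow> rule_ok r \<and> rule_syms r \<subseteq> NA"
proof -
  assume r: "r \<in> rl p"
  have cV: "\<And>x i. x \<in> V - {H} \<Longrightarrow> i < length (phi x) \<Longrightarrow> code (phi x ! i) \<in> code ` V \<and> phi x ! i \<in> V"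
    using phi_props by (meson imageI nth_mem subsetD)
  show ?thesis using r cV
    by (auto simp: rl_def rMK_def rIN_def rZ_def rDEC_def rINC_def rUNS_def rUNT_def rDELL_def rEMIT_def
        split: if_splits intro!: e_le)
qed

lemma r_uniform:
  "(\<forall>r\<in>rl p. is_subst r) \<or> (\<forall>r\<in>rl p. is_del r) \<or> (\<forall>r\<in>rl p. is_ins r)"
  by (auto simp: rl_def rMK_def rIN_def rZ_def rDEC_def rINC_def rUNS_def rUNT_def rDELL_def rEMIT_def)

definition pok :: "('a + nat) set \<times> ('a + nat) set \<Rightarrow> bool" where
  "pok PF \<longleftrightarrow> fst PF \<subseteq> NA \<and> snd PF \<subseteq> NA \<and> fst PF \<inter> snd PF = {}"

lemma pok0: "pok (SBall, JJ)"
  unfolding pok_def NSB_def by (auto simp: fsets cls_def Y1p_def)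
lemma pok1: "pok (Inl ` V \<union> Y1, SBall \<union> Tall \<union> JJ \<union> Spr \<union> Tpall \<union> SLnY)"
  unfolding pok_def NSB_def by (auto simp: fsets cls_def Y1p_def)
lemma pok2: "pok ({}, NSB)"
  unfolding pok_def NSB_def by (auto simp: fsets cls_def Y1p_def)
lemma pok3: "pok (JJ, {})"
  unfolding pok_def NSB_def by (auto simp: fsets cls_def Y1p_def)
lemma pok4: "pok (SLnY, JJ \<union> Tall \<union> SBall \<union> Y1 \<union> Spr \<union> Tpall)"
  unfolding pok_def NSB_def by (auto simp: fsets cls_def Y1p_def)
lemma pok5: "pok (T0, JJ \<union> Y1 \<union> Spr \<union> Tpall)"
  unfolding pok_def NSB_def by (auto simp: fsets cls_def Y1p_def)
lemma pok6: "pok (Y1, JJ \<union> Spr \<union> Tpall \<union> Tpos)"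
  unfolding pok_def NSB_def by (auto simp: fsets cls_def Y1p_def)
lemma pok7: "pok (Spr, Tpall \<union> JJ)"
  unfolding pok_def NSB_def by (auto simp: fsets cls_def Y1p_def)
lemma pok8: "pok (SB0 \<union> Y1, Spr \<union> Tpall \<union> JJ \<union> SBpos)"
  unfolding pok_def NSB_def by (auto simp: fsets cls_def Y1p_def)
lemma pok9: "pok (TEpos, Sun \<union> Spr \<union> JJ \<union> Tpall)"
  unfolding pok_def NSB_def by (auto simp: fsets cls_def Y1p_def)
lemma pok10: "pok (Sun, Spr \<union> Tpall \<union> JJ \<union> T0)"
  unfolding pok_def NSB_def by (auto simp: fsets cls_def Y1p_def)
lemma pok11: "pok (Tpall, JJ \<union> Sun)"
  unfolding pok_def NSB_def by (auto simp: fsets cls_def Y1p_def)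
lemma pok12: "pok (Sun, Spr \<union> JJ \<union> Tall)"
  unfolding pok_def NSB_def by (auto simp: fsets cls_def Y1p_def)
lemma pok13: "pok (TE0, Sun \<union> Spr \<union> JJ \<union> Tpall)"
  unfolding pok_def NSB_def by (auto simp: fsets cls_def Y1p_def)
lemma pok14: "pok (THs, Sun \<union> Spr \<union> JJ \<union> Tpall)"
  unfolding pok_def NSB_def by (auto simp: fsets cls_def Y1p_def)
lemma pok15: "pok ({}, {})"
  unfolding pok_def NSB_def by (auto simp: fsets cls_def Y1p_def)

lemma if_P: "pok a \<Longrightarrow> pok b \<Longrightarrow> pok (if c then a else b)" by simp
lemma ef_ok: "fst (ef E) \<subseteq> NA \<and> snd (ef E) \<subseteq> NA \<and> fst (ef E) \<inter> snd (ef E) = {}"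
proof -
  have "pok (ef E)" unfolding ef_def by (intro if_P pok0 pok1 pok2 pok3 pok4 pok5 pok6 pok7 pok8 pok9 pok10 pok11 pok12 pok13 pok14 pok15)
  thus ?thesis by (simp add: pok_def)
qed

definition kok :: "skind \<Rightarrow> bool" where "kok k = (k = KB \<or> (\<exists>c\<in>code ` V. k = KL c))"

lemma wf: "wf_anepfc Gam"
  unfolding wf_anepfc_def Gam_def
  using finite_NA r_ok r_uniform ef_ok
  by (auto simp: Nd_def Ed_def)

lemma cgs: "complete_graph_size Gam 10"
  by (simp add: complete_graph_size_def Gam_def Nd_def Ed_def)

end


lemma ra_subst: "u @ b # v \<in> rule_app (Subst a b) m (u @ a # v)"
  by auto
lemma ra_same: "a \<notin> set w \<Longrightarrow> w \<in> rule_app (Subst a b) m w"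
  by simp
lemma ra_delL: "v \<in> rule_app (Del a) ALeft (a # v)"
  by simp
lemma ra_insR: "w @ [a] \<in> rule_app (Ins a) ARight w"
  by simp

lemma cw_S: "cw k \<alpha> \<beta> n' m ps' pt \<in> rule_app (Subst (Ssym k ps n) (Ssym k ps' n')) mm (cw k \<alpha> \<beta> n m ps pt)"
  unfolding cw_def by (rule ra_subst)
lemma cw_T: "cw k \<alpha> \<beta> n m' ps pt' \<in> rule_app (Subst (Tsym pt m) (Tsym pt' m')) mm (cw k \<alpha> \<beta> n m ps pt)"
  unfolding cw_def using ra_subst[of "L \<alpha> @ Ssym k ps n # L \<beta>" "Tsym pt' m'" "[]"] by simp

lemma set_cw: "set (cw k \<alpha> \<beta> n m ps pt) = Inl ` set \<alpha> \<union> Inl ` set \<beta> \<union> {Ssym k ps n, Tsym pt m}"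
  unfolding cw_def by auto

context tagnet begin


lemma edge: "p \<in> Nd \<Longrightarrow> q \<in> Nd \<Longrightarrow> p \<noteq> q \<Longrightarrow> {p,q} \<in> Ed"
  by (auto simp: Ed_def)

lemma hop:
  assumes "even t" "w \<in> run Gam zz t p" "p \<in> Nd" "\<sigma> \<in> rl p" "w' \<in> rule_app \<sigma> (nm p) w"
    "q \<in> Nd" "p \<noteq> q" "filt_word (em {p,q}) w' (ef {p,q})"
  shows "w' \<in> run Gam zz (t + 2) q"
proof -
  have "w' \<in> run Gam zz (Suc t) p"
    using ev_step[of t w Gam zz p \<sigma> w'] assms by (simp add: Gam_def)
  then have "w' \<in> run Gam zz (Suc (Suc t)) q"
    using cm_step[of "Suc t" w' Gam zz p q] assms edge by (simp add: Gam_def)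
  thus ?thesis by simp
qed

lemma Ssym_in: "kok k \<Longrightarrow> n \<le> Emax \<Longrightarrow> Ssym k ps n \<in> NA"
  by (auto simp: kok_def Ssym_def)

lemma count_step:
  assumes t: "even t" and w: "cw k \<alpha> \<beta> (Suc n) m False False \<in> run Gam zz t 3"
    and b: "Suc n + m \<le> Emax" and k: "kok k"
  shows "cw k \<alpha> \<beta> n (Suc m) False False \<in> run Gam zz (t + 8) 3"
proof -
  have ok1: "Subst (Ssym k False (Suc n)) (Ssym k True n) \<in> rl 3"
    using k b by (auto simp: kok_def Ssym_def rl_def rDEC_def)
  have s1: "cw k \<alpha> \<beta> n m True False \<in> run Gam zz (t + 2) 4"
    apply (rule hop[OF t w _ ok1 cw_S])
    using k b by (auto simp: Nd_def nm_def em_def ef_def doubleton_eq_iff set_cw fsets kok_def Ssym_def Tsym_def)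
  have ok2: "Subst (Tsym False m) (Tsym True (Suc m)) \<in> rl 4"
    using b by (auto simp: Tsym_def rl_def rINC_def)
  have s2: "cw k \<alpha> \<beta> n (Suc m) True True \<in> run Gam zz (t + 2 + 2) 5"
    apply (rule hop[OF _ s1 _ ok2 cw_T])
    using t k b by (auto simp: Nd_def nm_def em_def ef_def doubleton_eq_iff set_cw fsets kok_def Ssym_def Tsym_def)
  have ok3: "Subst (Ssym k True n) (Ssym k False n) \<in> rl 5"
    using k b by (auto simp: kok_def Ssym_def rl_def rUNS_def)
  have s3: "cw k \<alpha> \<beta> n (Suc m) False True \<in> run Gam zz (t + 2 + 2 + 2) 6"
    apply (rule hop[OF _ s2 _ ok3 cw_S])
    using t k b by (auto simp: Nd_def nm_def em_def ef_def doubleton_eq_iff set_cw fsets kok_def Ssym_def Tsym_def)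
  have ok4: "Subst (Tsym True (Suc m)) (Tsym False (Suc m)) \<in> rl 6"
    using b by (auto simp: Tsym_def rl_def rUNT_def)
  have s4: "cw k \<alpha> \<beta> n (Suc m) False False \<in> run Gam zz (t + 2 + 2 + 2 + 2) 3"
    apply (rule hop[OF _ s3 _ ok4 cw_T])
    using t k b by (auto simp: Nd_def nm_def em_def ef_def doubleton_eq_iff set_cw fsets kok_def Ssym_def Tsym_def)
  have e: "t + 2 + 2 + 2 + 2 = t + 8" by simp
  show ?thesis using s4 unfolding e .
qed

lemma count_loop:
  assumes "even t" "cw k \<alpha> \<beta> n m False False \<in> run Gam zz t 3" "n + m \<le> Emax" "kok k"
  shows "cw k \<alpha> \<beta> 0 (n + m) False False \<in> run Gam zz (t + 8 * n) 3"
  using assms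
proof (induction n arbitrary: t m)
  case 0 then show ?case by simp
next
  case (Suc n)
  have "cw k \<alpha> \<beta> n (Suc m) False False \<in> run Gam zz (t + 8) 3"
    by (rule count_step) (use Suc.prems in auto)
  from Suc.IH[OF _ this] Suc.prems show ?case by (simp add: algebra_simps)
qed


lemma run_ne: "w \<in> run Gam zz t p \<Longrightarrow> run Gam zz t p \<noteq> {}" by auto

lemma hop_S:
  assumes "even t" "w \<in> run Gam zz t p" "Subst a b \<in> rl p" "w = u @ a # v" "p \<in> Nd" "q \<in> Nd" "p \<noteq> q"
    "filt_word (em {p,q}) (u @ b # v) (ef {p,q})"
  shows "u @ b # v \<in> run Gam zz (t + 2) q"
  by (rule hop[OF assms(1,2) assms(5) assms(3) _ assms(6,7,8)]) (simp only: assms(4) ra_subst)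

lemma hop_same:
  assumes "even t" "w \<in> run Gam zz t p" "Subst a b \<in> rl p" "a \<notin> set w" "p \<in> Nd" "q \<in> Nd" "p \<noteq> q"
    "filt_word (em {p,q}) w (ef {p,q})"
  shows "w \<in> run Gam zz (t + 2) q"
  by (rule hop[OF assms(1,2) assms(5) assms(3) _ assms(6,7,8)]) (simp add: assms(4))

lemma hop_D:
  assumes "even t" "w \<in> run Gam zz t p" "Del a \<in> rl p" "nm p = ALeft" "w = a # w'" "p \<in> Nd" "q \<in> Nd" "p \<noteq> q"
    "filt_word (em {p,q}) w' (ef {p,q})"
  shows "w' \<in> run Gam zz (t + 2) q"
  by (rule hop[OF assms(1,2) assms(6) assms(3) _ assms(7,8,9)]) (simp add: assms(4,5))

lemma hop_I:
  assumes "even t" "w \<in> run Gam zz t p" "Ins a \<in> rl p" "nm p = ARight" "p \<in> Nd" "q \<in> Nd" "p \<noteq> q"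
    "filt_word (em {p,q}) (w @ [a]) (ef {p,q})"
  shows "w @ [a] \<in> run Gam zz (t + 2) q"
  by (rule hop[OF assms(1,2) assms(5) assms(3) _ assms(6,7,8)]) (simp add: assms(4))

lemmas hsimps = ball_Un bex_Un filt_weak filt_strong Y1p_def Nd_def nm_def em_def ef_def doubleton_eq_iff set_cw fsets kok_def Ssym_def Tsym_def cw_def

lemma x_phase:
  assumes t: "even t" and w: "L (x # v) \<in> run Gam zz t 0" and x: "x \<in> V - {H}"
  shows "\<exists>t'. even t' \<and> sy (MSB 0) # L v @ [sy (MTT (e x 0))] \<in> run Gam zz t' 7"
proof -
  have Ele: "e x 0 \<le> Emax" using x by (intro e_le) auto
  have ok1: "Subst (Inl x) (sy (MSB (e x 0))) \<in> rl 0" using x by (auto simp: rl_def rMK_def)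
  have s1: "sy (MSB (e x 0)) # L v \<in> run Gam zz (t + 2) 1"
    using hop_S[OF t w ok1, of "[]" "L v" 1] Ele by (auto simp: hsimps simp del: run.simps filt_word.simps)
  have ok2: "Ins (sy MJ) \<in> rl 1" by (simp add: rl_def rIN_def)
  have s2: "(sy (MSB (e x 0)) # L v) @ [sy MJ] \<in> run Gam zz (t + 2 + 2) 2"
    using hop_I[OF _ s1 ok2, of 2] t by (auto simp: hsimps simp del: run.simps filt_word.simps)
  have ok3: "Subst (sy MJ) (sy (MTT 0)) \<in> rl 2" by (simp add: rl_def rZ_def)
  have s3: "cw KB [] v (e x 0) 0 False False \<in> run Gam zz (t + 2 + 2 + 2) 3"
    using hop_S[OF _ s2 ok3, of "sy (MSB (e x 0)) # L v" "[]" 3] t Ele by (auto simp: hsimps simp del: run.simps filt_word.simps)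
  have s4: "cw KB [] v 0 (e x 0) False False \<in> run Gam zz (t + 2 + 2 + 2 + 8 * e x 0) 3"
    using count_loop[OF _ s3] t Ele by (simp add: kok_def)
  have ok4: "Subst (sy (MSL (code H) 0)) (Inl H) \<in> rl 3" using HV by (auto simp: rl_def rDEC_def)
  have s5: "cw KB [] v 0 (e x 0) False False \<in> run Gam zz (t + 2 + 2 + 2 + 8 * e x 0 + 2) 7"
    using hop_same[OF _ s4 ok4, of 7] t Ele by (auto simp: hsimps simp del: run.simps filt_word.simps)
  show ?thesis using s5 t by (intro exI[of _ "t + 2 + 2 + 2 + 8 * e x 0 + 2"]) (simp add: cw_def Ssym_def Tsym_def)
qed

lemma dell_H:
  assumes t: "even t" and w: "sy (MSB 0) # L v @ [sy (MTT (e x 0))] \<in> run Gam zz t 7" and x: "x \<in> Hset"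
  shows "\<exists>t'. run Gam zz t' 9 \<noteq> {}"
proof -
  have x': "x \<in> V - {H}" "H \<in> set (phi x)" using x by (auto simp: Hset_def)
  have Ele: "e x 0 \<le> Emax" using x' by (intro e_le) auto
  have ok: "Del (sy (MSB 0)) \<in> rl 7" by (auto simp: rl_def rDELL_def)
  have "L v @ [sy (MTT (e x 0))] \<in> run Gam zz (t + 2) 9"
    using hop_D[OF t w ok, of "L v @ [sy (MTT (e x 0))]" 9] x' Ele by (auto simp: hsimps simp del: run.simps filt_word.simps)
  thus ?thesis by blast
qed

lemma dell_nH:
  assumes t: "even t" and w: "sy (MSB 0) # L v @ [sy (MTT (e x 0))] \<in> run Gam zz t 7" and x: "x \<in> V - {H}"
  shows "L v @ [sy (MTT (e x 0))] \<in> run Gam zz (t + 2) 8"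
proof -
  have Ele: "e x 0 \<le> Emax" using x by (intro e_le) auto
  have ok: "Del (sy (MSB 0)) \<in> rl 7" by (auto simp: rl_def rDELL_def)
  show ?thesis
    using hop_D[OF t w ok, of "L v @ [sy (MTT (e x 0))]" 8] x Ele by (auto simp: hsimps simp del: run.simps filt_word.simps)
qed


lemma phi_nth: "x \<in> V - {H} \<Longrightarrow> i < length (phi x) \<Longrightarrow> phi x ! i \<in> V"
  using phi_props[of x] by (meson nth_mem subsetD)

lemma emit_first:
  assumes t: "even t" and w: "L (y # r) @ [sy (MTT (e x 0))] \<in> run Gam zz t 8"
    and x: "x \<in> V - {H}" "x \<notin> Hset" and y: "y \<in> V - {H}"
  shows "cw (KL (code (phi x ! 0))) r [] (e x 1) 0 False False \<in> run Gam zz (t + 2 + 2 + 2 + 2 + 2) 3"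
proof -
  have lx: "2 \<le> length (phi x)" using nonH_props[OF x] by simp
  have E0: "e x 0 \<le> Emax" "e x 1 \<le> Emax" "e y 0 \<le> Emax" using x y lx by (auto intro!: e_le)
  have p0: "phi x ! 0 \<in> V" using phi_nth[OF x(1), of 0] phi_props[OF x(1)] by simp
  have c0: "code (phi x ! 0) \<in> code ` V" using p0 by simp
  have Y: "Y1p (MSL (code (phi x ! 0)) (e x 1))" using x by (auto simp: Y1p_def)
  let ?sl = "sy (MSL (code (phi x ! 0)) (e x 1))"
  have ok1: "Subst (sy (MTT (e x 0))) ?sl \<in> rl 8"
    using x lx by (auto simp: rl_def rEMIT_def intro!: exI[of _ x] exI[of _ 0])
  have s1: "L (y # r) @ [?sl] \<in> run Gam zz (t + 2) 0"
    using hop_S[OF t w ok1, of "L (y # r)" "[]" 0] E0 c0 Y y by (auto simp: hsimps simp del: run.simps filt_word.simps)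
  have ok2: "Subst (Inl y) (sy (MSB (e y 0))) \<in> rl 0" using y by (auto simp: rl_def rMK_def)
  have s2: "sy (MSB (e y 0)) # L r @ [?sl] \<in> run Gam zz (t + 2 + 2) 1"
    using hop_S[OF _ s1 ok2, of "[]" "L r @ [?sl]" 1] t E0 by (auto simp: hsimps simp del: run.simps filt_word.simps)
  have ok3: "Ins (sy MJ) \<in> rl 1" by (simp add: rl_def rIN_def)
  have s3: "(sy (MSB (e y 0)) # L r @ [?sl]) @ [sy MJ] \<in> run Gam zz (t + 2 + 2 + 2) 2"
    using hop_I[OF _ s2 ok3, of 2] t by (auto simp: hsimps simp del: run.simps filt_word.simps)
  have ok4: "Subst (sy MJ) (sy (MTT 0)) \<in> rl 2" by (simp add: rl_def rZ_def)
  have s4: "(sy (MSB (e y 0)) # L r @ [?sl]) @ [sy (MTT 0)] \<in> run Gam zz (t + 2 + 2 + 2 + 2) 7"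
    using hop_S[OF _ s3 ok4, of "sy (MSB (e y 0)) # L r @ [?sl]" "[]" 7] t E0 c0 Y
    by (auto simp: hsimps simp del: run.simps filt_word.simps)
  have ok5: "Del (sy (MSB (e y 0))) \<in> rl 7" using E0 by (auto simp: rl_def rDELL_def)
  have s5: "L r @ [?sl, sy (MTT 0)] \<in> run Gam zz (t + 2 + 2 + 2 + 2 + 2) 3"
    using hop_D[OF _ s4 ok5, of "L r @ [?sl, sy (MTT 0)]" 3] t E0 c0 Y
    by (auto simp: hsimps simp del: run.simps filt_word.simps)
  thus ?thesis by (simp add: cw_def Ssym_def Tsym_def)
qed

lemma emit_loop:
  assumes "Suc i + Suc n = length (phi x)" "x \<in> V - {H}" "x \<notin> Hset" "even t"
    "cw (KL (code (phi x ! i))) (r @ take i (phi x)) [] (e x (Suc i)) 0 False False \<in> run Gam zz t 3"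
  shows "\<exists>t'. even t' \<and> L (r @ phi x) \<in> run Gam zz t' 0"
  using assms
proof (induction n arbitrary: i t)
  case (0 i t)
  note x = "0.prems"(2,3)
  let ?p = "phi x ! i" and ?E = "e x (Suc i)" and ?\<alpha> = "r @ take i (phi x)"
  have pV: "?p \<in> V" using phi_nth[OF x(1)] "0.prems"(1) by simp
  have p2V: "phi x ! Suc i \<in> V" using phi_nth[OF x(1)] "0.prems"(1) by simp
  have Ele: "?E \<le> Emax" using "0.prems"(1) x by (intro e_le) auto
  have s1: "cw (KL (code ?p)) ?\<alpha> [] 0 ?E False False \<in> run Gam zz (t + 8 * ?E) 3"
    using count_loop[OF "0.prems"(4,5)] Ele pV by (simp add: kok_def)
  have ok2: "Subst (sy (MSL (code ?p) 0)) (Inl ?p) \<in> rl 3" using pV by (auto simp: rl_def rDEC_def)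
  have s2: "L ?\<alpha> @ Inl ?p # [sy (MTT ?E)] \<in> run Gam zz (t + 8 * ?E + 2) 8"
    using hop_S[OF _ s1 ok2, of "L ?\<alpha>" "[sy (MTT ?E)]" 8] "0.prems" Ele x
    by (auto simp: hsimps simp del: run.simps filt_word.simps intro!: bexI[of _ x] exI[of _ "Suc i"])
  have ok3: "Subst (sy (MTT ?E)) (Inl (phi x ! Suc i)) \<in> rl 8"
    using "0.prems"(1) x by (auto simp: rl_def rEMIT_def intro!: exI[of _ x] exI[of _ "Suc i"])
  have s3: "(L ?\<alpha> @ [Inl ?p]) @ [Inl (phi x ! Suc i)] \<in> run Gam zz (t + 8 * ?E + 2 + 2) 0"
    using hop_S[OF _ s2 ok3, of "L ?\<alpha> @ [Inl ?p]" "[]" 0] "0.prems" pV p2V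
    by (auto simp: hsimps simp del: run.simps filt_word.simps)
  have a: "take (Suc i) (phi x) = take i (phi x) @ [?p]"
    by (rule take_Suc_conv_app_nth) (use "0.prems"(1) in simp)
  have b: "take (Suc (Suc i)) (phi x) = take (Suc i) (phi x) @ [phi x ! Suc i]"
    by (rule take_Suc_conv_app_nth) (use "0.prems"(1) in simp)
  have c: "take (Suc (Suc i)) (phi x) = phi x" using "0.prems"(1) by simp
  have "r @ phi x = ?\<alpha> @ [?p] @ [phi x ! Suc i]"
    using a b c by simp
  then have "L (r @ phi x) \<in> run Gam zz (t + 8 * ?E + 2 + 2) 0"
    using s3 by (simp only: map_append list.map append_assoc)
  then show ?case using "0.prems"(4) by (intro exI[of _ "t + 8 * ?E + 2 + 2"]) simp
next
  case (Suc n i t)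
  note x = Suc.prems(2,3)
  let ?p = "phi x ! i" and ?E = "e x (Suc i)" and ?\<alpha> = "r @ take i (phi x)"
  let ?sl = "sy (MSL (code (phi x ! Suc i)) (e x (Suc (Suc i))))"
  have pV: "?p \<in> V" using phi_nth[OF x(1)] Suc.prems(1) by simp
  have p2V: "phi x ! Suc i \<in> V" using phi_nth[OF x(1)] Suc.prems(1) by simp
  have Ele: "?E \<le> Emax" "e x (Suc (Suc i)) \<le> Emax" using Suc.prems(1) x by (auto intro!: e_le)
  have s1: "cw (KL (code ?p)) ?\<alpha> [] 0 ?E False False \<in> run Gam zz (t + 8 * ?E) 3"
    using count_loop[OF Suc.prems(4,5)] Ele pV by (simp add: kok_def)
  have ok2: "Subst (sy (MSL (code ?p) 0)) (Inl ?p) \<in> rl 3" using pV by (auto simp: rl_def rDEC_def)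
  have s2: "L ?\<alpha> @ Inl ?p # [sy (MTT ?E)] \<in> run Gam zz (t + 8 * ?E + 2) 8"
    using hop_S[OF _ s1 ok2, of "L ?\<alpha>" "[sy (MTT ?E)]" 8] Suc.prems Ele x
    by (auto simp: hsimps simp del: run.simps filt_word.simps intro!: bexI[of _ x] exI[of _ "Suc i"])
  have ok3: "Subst (sy (MTT ?E)) ?sl \<in> rl 8"
    using Suc.prems(1) x by (auto simp: rl_def rEMIT_def intro!: exI[of _ x] exI[of _ "Suc i"])
  have nY: "\<not> Y1p (MSL (code (phi x ! Suc i)) (e x (Suc (Suc i))))" using x by (auto simp: Y1p_def)
  have s3: "(L ?\<alpha> @ [Inl ?p]) @ [?sl] \<in> run Gam zz (t + 8 * ?E + 2 + 2) 1"
    using hop_S[OF _ s2 ok3, of "L ?\<alpha> @ [Inl ?p]" "[]" 1] Suc.prems p2V Ele nY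
    by (auto simp: hsimps simp del: run.simps filt_word.simps)
  have ok4: "Ins (sy MJ) \<in> rl 1" by (simp add: rl_def rIN_def)
  have s4: "((L ?\<alpha> @ [Inl ?p]) @ [?sl]) @ [sy MJ] \<in> run Gam zz (t + 8 * ?E + 2 + 2 + 2) 2"
    using hop_I[OF _ s3 ok4, of 2] Suc.prems by (auto simp: hsimps simp del: run.simps filt_word.simps)
  have ok5: "Subst (sy MJ) (sy (MTT 0)) \<in> rl 2" by (simp add: rl_def rZ_def)
  have s5: "((L ?\<alpha> @ [Inl ?p]) @ [?sl]) @ [sy (MTT 0)] \<in> run Gam zz (t + 8 * ?E + 2 + 2 + 2 + 2) 3"
    using hop_S[OF _ s4 ok5, of "(L ?\<alpha> @ [Inl ?p]) @ [?sl]" "[]" 3] Suc.prems p2V Ele nY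
    by (auto simp: hsimps simp del: run.simps filt_word.simps)
  have eqa: "?\<alpha> @ [?p] = r @ take (Suc i) (phi x)"
    using Suc.prems(1) by (simp add: take_Suc_conv_app_nth)
  have "cw (KL (code (phi x ! Suc i))) (r @ take (Suc i) (phi x)) [] (e x (Suc (Suc i))) 0 False False
      \<in> run Gam zz (t + 8 * ?E + 2 + 2 + 2 + 2) 3"
    using s5 eqa[symmetric] by (simp add: cw_def Ssym_def Tsym_def)
  from Suc.IH[OF _ x _ this] Suc.prems show ?case by simp
qed


lemma macro:
  assumes t: "even t" and w: "L (x # y # r) \<in> run Gam zz t 0" and x: "x \<in> V - {H}" "x \<notin> Hset"
    and y: "y \<in> V - {H}"
  shows "\<exists>t'. even t' \<and> L (r @ phi x) \<in> run Gam zz t' 0"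
proof -
  obtain t1 where t1: "even t1" "sy (MSB 0) # L (y # r) @ [sy (MTT (e x 0))] \<in> run Gam zz t1 7"
    using x_phase[OF t w x(1)] by blast
  have s2: "L (y # r) @ [sy (MTT (e x 0))] \<in> run Gam zz (t1 + 2) 8"
    by (rule dell_nH[OF t1 x(1)])
  have s3: "cw (KL (code (phi x ! 0))) r [] (e x 1) 0 False False \<in> run Gam zz (t1 + 2 + 2 + 2 + 2 + 2 + 2) 3"
    by (rule emit_first[OF _ s2 x y]) (use t1 in auto)
  have lx: "2 \<le> length (phi x)" using nonH_props[OF x] by simp
  have s3': "cw (KL (code (phi x ! 0))) (r @ take 0 (phi x)) [] (e x (Suc 0)) 0 False False \<in> run Gam zz (t1 + 2 + 2 + 2 + 2 + 2 + 2) 3"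
    using s3 by simp
  show ?thesis
    by (rule emit_loop[of 0 "length (phi x) - 2" x, OF _ x _ s3']) (use lx t1 in auto)
qed

lemma acc_nil:
  assumes t: "even t" and w: "L [] \<in> run Gam zz t 0"
  shows "\<exists>t'. run Gam zz t' 9 \<noteq> {}"
proof -
  obtain a where a: "a \<in> V - {H}" using VH_ne by blast
  have ok: "Subst (Inl a) (sy (MSB (e a 0))) \<in> rl 0" using a by (auto simp: rl_def rMK_def)
  have "[] \<in> run Gam zz (t + 2) 9"
    using hop_same[OF t w ok, of 9] by (auto simp: hsimps simp del: run.simps filt_word.simps)
  thus ?thesis by blast
qed

lemma acc_one:
  assumes t: "even t" and w: "L [x] \<in> run Gam zz t 0" and x: "x \<in> V - {H}"
  shows "\<exists>t'. run Gam zz t' 9 \<noteq> {}"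
proof -
  have ok: "Subst (Inl x) (sy (MSB (e x 0))) \<in> rl 0" using x by (auto simp: rl_def rMK_def)
  have "[] @ [sy (MSB (e x 0))] \<in> run Gam zz (t + 2) 9"
    using hop_S[OF t w ok, of "[]" "[]" 9] by (auto simp: hsimps NSB_def simp del: run.simps filt_word.simps)
  thus ?thesis by blast
qed

lemma acc_H:
  assumes t: "even t" and w: "L (x # v) \<in> run Gam zz t 0" and x: "x \<in> Hset"
  shows "\<exists>t'. run Gam zz t' 9 \<noteq> {}"
proof -
  have x': "x \<in> V - {H}" using x by (auto simp: Hset_def)
  obtain t1 where t1: "even t1" "sy (MSB 0) # L v @ [sy (MTT (e x 0))] \<in> run Gam zz t1 7"
    using x_phase[OF t w x'] by blast
  show ?thesis by (rule dell_H[OF t1 x])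
qed

lemma len2: "\<not> length u < 2 \<Longrightarrow> \<exists>x y r. u = x # y # r"
  by (cases u; cases "tl u") auto

abbreviation S where "S z k \<equiv> (tag_step phi ^^ k) z"

lemma reach:
  assumes z: "z \<in> lists (V - {H})" and nh: "\<forall>j\<le>k. \<not> halting_word H (S z j)"
  shows "\<exists>t. even t \<and> L (S z k) \<in> run Gam (L z) t 0 \<and> S z k \<in> lists (V - {H})"
  using nh
proof (induction k)
  case 0
  then show ?case using z by (intro exI[of _ 0]) (simp add: init_config_def Gam_def)
next
  case (Suc k)
  then obtain t where t: "even t" "L (S z k) \<in> run Gam (L z) t 0" "S z k \<in> lists (V - {H})" by auto
  have nh1: "\<not> halting_word H (S z k)" using Suc.prems by simp
  have nh2: "\<not> halting_word H (S z (Suc k))" using Suc.prems by blast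
  obtain x y r where u: "S z k = x # y # r"
    using nh1 len2[of "S z k"] by (auto simp: halting_word_def)
  have st: "S z (Suc k) = r @ phi x" using u by (simp add: tag_step_def)
  have xy: "x \<in> V - {H}" "y \<in> V - {H}" "r \<in> lists (V - {H})" using t(3) u by auto
  have xH: "x \<notin> Hset" using nh2 st by (auto simp: halting_word_def Hset_def)
  obtain t' where "even t'" "L (r @ phi x) \<in> run Gam (L z) t' 0"
    using macro[OF t(1) _ xy(1) xH xy(2)] t(2) u by auto
  moreover have "r @ phi x \<in> lists (V - {H})" using xy nonH_props[OF xy(1) xH] by auto
  ultimately show ?case using st by auto
qed

theorem complete:
  assumes z: "z \<in> lists (V - {H})" and h: "tag_halts H phi z"
  shows "\<exists>n. run Gam (L z) n 9 \<noteq> {}"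
proof -
  obtain n where n: "halting_word H (S z n)" "\<And>j. j < n \<Longrightarrow> \<not> halting_word H (S z j)"
  proof -
    obtain n0 where "halting_word H (S z n0)" using h unfolding tag_halts_def by blast
    hence "halting_word H (S z (LEAST n. halting_word H (S z n)))" by (rule LeastI)
    moreover have "\<And>j. j < (LEAST n. halting_word H (S z n)) \<Longrightarrow> \<not> halting_word H (S z j)"
      by (rule not_less_Least)
    ultimately show ?thesis using that by blast
  qed
  show ?thesis
  proof (cases n)
    case 0
    have w: "L z \<in> run Gam (L z) 0 0" by (simp add: init_config_def Gam_def)
    have "H \<notin> set z" using z by auto
    hence "length z < 2" using n(1) 0 by (simp add: halting_word_def)
    then consider "z = []" | x where "z = [x]"
      by (cases z) auto
    then show ?thesis
    proof cases
      case 1 then show ?thesis using acc_nil[where t=0] w by auto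
    next
      case (2 x) then show ?thesis using acc_one[where t=0 and x=x] w z by auto
    qed
  next
    case (Suc k)
    obtain t where t: "even t" "L (S z k) \<in> run Gam (L z) t 0" "S z k \<in> lists (V - {H})"
      using reach[OF z, of k] n(2) Suc by auto
    have nh1: "\<not> halting_word H (S z k)" using n(2) Suc by simp
    obtain x y r where u: "S z k = x # y # r"
      using nh1 len2[of "S z k"] by (auto simp: halting_word_def)
    have st: "S z (Suc k) = r @ phi x" using u by (simp add: tag_step_def)
    have xy: "x \<in> V - {H}" "r \<in> lists (V - {H})" using t(3) u by auto
    have "x \<in> Hset"
    proof (rule ccontr)
      assume "x \<notin> Hset"
      from nonH_props[OF xy(1) this] have "2 \<le> length (phi x)" "set (phi x) \<subseteq> V - {H}" by auto
      hence "\<not> halting_word H (r @ phi x)" using xy(2) by (auto simp: halting_word_def)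
      thus False using n(1) Suc st by simp
    qed
    moreover have "L (x # (y # r)) \<in> run Gam (L z) t 0" using t(2) u by simp
    ultimately show ?thesis using acc_H[OF t(1)] by blast
  qed
qed

end


lemma subst_cases: "w' \<in> rule_app (Subst a b) m w \<Longrightarrow> (a \<notin> set w \<and> w' = w) \<or> (\<exists>u v. w = u @ a # v \<and> w' = u @ b # v)"
  by (auto split: if_splits)

lemma uniq_split: "u @ a # v = p @ a # q \<Longrightarrow> a \<notin> set p \<Longrightarrow> a \<notin> set q \<Longrightarrow> u = p \<and> v = q"
proof (induction p arbitrary: u)
  case Nil then show ?case by (cases u) auto
next
  case (Cons c p) then show ?case by (cases u) auto
qed

lemma subst_at:
  assumes "w' \<in> rule_app (Subst a b) m (p @ s # q)" "s \<notin> set p" "s \<notin> set q" "a \<notin> set p" "a \<notin> set q"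
  shows "(a \<noteq> s \<and> w' = p @ s # q) \<or> (a = s \<and> w' = p @ b # q)"
  using subst_cases[OF assms(1)]
proof
  assume "a \<notin> set (p @ s # q) \<and> w' = p @ s # q" then show ?thesis by auto
next
  assume "\<exists>u v. p @ s # q = u @ a # v \<and> w' = u @ b # v"
  then obtain u v where uv: "p @ s # q = u @ a # v" "w' = u @ b # v" by blast
  hence "a \<in> set (p @ s # q)" by simp
  hence as: "a = s" using assms(4,5) by auto
  from uniq_split[of u a v p q] uv as assms(2,3) show ?thesis by auto
qed

lemma del_cases: "w' \<in> rule_app (Del a) ALeft w \<Longrightarrow> w' = w \<or> w = a # w'"
  by (auto split: if_splits)

lemma ins_cases: "w' \<in> rule_app (Ins a) ARight w \<Longrightarrow> w' = w @ [a]"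
  by auto

lemma Inl_split:
  assumes "u @ Inl c # v = L t @ ms" "\<forall>s\<in>set ms. \<forall>d. s \<noteq> Inl d"
  shows "\<exists>t1 t2. t = t1 @ c # t2 \<and> u = L t1 \<and> v = L t2 @ ms"
  using assms(1)
proof (induction t arbitrary: u)
  case Nil
  then have "ms = u @ Inl c # v" by simp
  then have "Inl c \<in> set ms" by simp
  then show ?case using assms(2) by blast
next
  case (Cons d t)
  show ?case
  proof (cases u)
    case Nil then show ?thesis using Cons.prems by (intro exI[of _ "[]"] exI[of _ t]) auto
  next
    case (Cons s u')
    then have "s = Inl d" "u' @ Inl c # v = L t @ ms" using Cons.prems by auto
    from Cons.IH[OF this(2)] obtain t1 t2 where "t = t1 @ c # t2" "u' = L t1" "v = L t2 @ ms" by blast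
    then show ?thesis using \<open>s = Inl d\<close> Cons by (intro exI[of _ "d # t1"] exI[of _ t2]) auto
  qed
qed

locale tagsound = tagnet +
  fixes R :: "'a list set"
  assumes R_good: "u \<in> R \<Longrightarrow> u \<in> lists (V - {H}) \<and> 2 \<le> length u \<and> hd u \<notin> Hset"
    and R_step: "u \<in> R \<Longrightarrow> tag_step phi u \<in> R"
begin

lemma Rx: assumes "x # y # r \<in> R"
  shows "x \<in> V - {H}" "y \<in> V - {H}" "set r \<subseteq> V - {H}" "x \<notin> Hset" "2 \<le> length (phi x)"
    "set (phi x) \<subseteq> V - {H}" "r @ phi x \<in> R"
proof -
  show a: "x \<in> V - {H}" "y \<in> V - {H}" "set r \<subseteq> V - {H}" "x \<notin> Hset" using R_good[OF assms] by auto
  show "2 \<le> length (phi x)" "set (phi x) \<subseteq> V - {H}" using nonH_props[OF a(1,4)] by auto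
  show "r @ phi x \<in> R" using R_step[OF assms] by (simp add: tag_step_def)
qed

lemma Ru: assumes "u1 @ a # u2 \<in> R"
  shows "a \<in> V - {H}" "set u1 \<subseteq> V - {H}" "set u2 \<subseteq> V - {H}" "u1 \<noteq> [] \<or> u2 \<noteq> []"
  using R_good[OF assms] by auto

definition ysy :: "'a \<Rightarrow> 'a + nat" where "ysy x = sy (MSL (code (phi x ! 0)) (e x 1))"

definition "X0 w \<longleftrightarrow> (\<exists>u\<in>R. w = L u)"
definition "Y0 w \<longleftrightarrow> (\<exists>x y r. x # y # r \<in> R \<and> w = L (y # r) @ [ysy x])"
definition "XM w \<longleftrightarrow> (\<exists>u1 a u2. u1 @ a # u2 \<in> R \<and> w = L u1 @ sy (MSB (e a 0)) # L u2)"
definition "YM w \<longleftrightarrow> (\<exists>x y r v1 b v2. x # y # r \<in> R \<and> y # r = v1 @ b # v2 \<and>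
    w = L v1 @ sy (MSB (e b 0)) # L v2 @ [ysy x])"
definition "EN w \<longleftrightarrow> (\<exists>x y r i. x # y # r \<in> R \<and> 0 < i \<and> Suc i < length (phi x) \<and>
    w = L (r @ take i (phi x)) @ [sy (MSL (code (phi x ! i)) (e x (Suc i)))])"
definition "XJ w \<longleftrightarrow> (\<exists>w0. XM w0 \<and> w = w0 @ [sy MJ])"
definition "YJ w \<longleftrightarrow> (\<exists>w0. YM w0 \<and> w = w0 @ [sy MJ])"
definition "ENJ w \<longleftrightarrow> (\<exists>w0. EN w0 \<and> w = w0 @ [sy MJ])"
definition "YT w \<longleftrightarrow> (\<exists>w0. YM w0 \<and> w = w0 @ [sy (MTT 0)])"
definition "XS w \<longleftrightarrow> (\<exists>x y r. x # y # r \<in> R \<and> w = L (y # r) @ [sy (MTT (e x 0))])"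
definition "LX w \<longleftrightarrow> (\<exists>x y r i. x # y # r \<in> R \<and> Suc i < length (phi x) \<and>
    w = L (r @ take (Suc i) (phi x)) @ [sy (MTT (e x (Suc i)))])"
definition "ctr_ok k \<alpha> \<beta> tot \<longleftrightarrow> (\<exists>a. \<alpha> @ a # \<beta> \<in> R \<and> k = KB \<and> tot = e a 0) \<or>
   (\<exists>x y r i. x # y # r \<in> R \<and> Suc i < length (phi x) \<and> \<alpha> = r @ take i (phi x) \<and> \<beta> = [] \<and>
      k = KL (code (phi x ! i)) \<and> tot = e x (Suc i))"
definition CS :: "bool \<Rightarrow> bool \<Rightarrow> (skind \<Rightarrow> nat \<Rightarrow> nat \<Rightarrow> bool) \<Rightarrow> ('a + nat) list \<Rightarrow> bool" where
  "CS ps pt Q w \<longleftrightarrow> (\<exists>k \<alpha> \<beta> n m tot. ctr_ok k \<alpha> \<beta> tot \<and> n + m + (if ps \<and> \<not> pt then 1 else 0) = tot \<and>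
     (pt \<longrightarrow> 1 \<le> m) \<and> Q k n m \<and> w = cw k \<alpha> \<beta> n m ps pt)"

lemma ctr_facts: assumes "ctr_ok k \<alpha> \<beta> tot"
  shows "tot \<le> Emax" "kok k" "set \<alpha> \<subseteq> V - {H}" "set \<beta> \<subseteq> V - {H}" "0 < tot"
proof -
  have "(tot \<le> Emax \<and> kok k \<and> set \<alpha> \<subseteq> V - {H} \<and> set \<beta> \<subseteq> V - {H} \<and> 0 < tot)"
    using assms unfolding ctr_ok_def
  proof (elim disjE exE conjE)
    fix a assume a: "\<alpha> @ a # \<beta> \<in> R" "k = KB" "tot = e a 0"
    have "e a 0 \<le> Emax" by (rule e_le) (use Ru(1)[OF a(1)] in simp_all)
    then show ?thesis using Ru(2,3)[OF a(1)] a(2,3) by (simp add: kok_def)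
  next
    fix x y r i assume a: "x # y # r \<in> R" "Suc i < length (phi x)" "\<alpha> = r @ take i (phi x)" "\<beta> = []"
      "k = KL (code (phi x ! i))" "tot = e x (Suc i)"
    have "phi x ! i \<in> set (phi x)" using a(2) by simp
    hence pi: "phi x ! i \<in> V - {H}" using Rx(6)[OF a(1)] by blast
    have st: "set (take i (phi x)) \<subseteq> V - {H}" using set_take_subset[of i "phi x"] Rx(6)[OF a(1)] by (rule order_trans)
    have "e x (Suc i) \<le> Emax" by (rule e_le) (use Rx(1)[OF a(1)] a(2) in simp_all)
    moreover have "kok k" using pi a(5) by (simp add: kok_def)
    ultimately show ?thesis using st Rx(3)[OF a(1)] a(3,4,6) by simp
  qed
  then show "tot \<le> Emax" "kok k" "set \<alpha> \<subseteq> V - {H}" "set \<beta> \<subseteq> V - {H}" "0 < tot" by auto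
qed

definition IE :: "nat \<Rightarrow> ('a + nat) list \<Rightarrow> bool" where
  "IE p w = (if p = 0 then X0 w \<or> Y0 w
    else if p = 1 then XM w \<or> YM w \<or> EN w
    else if p = 2 then XJ w \<or> YJ w \<or> ENJ w \<or> YT w \<or> CS False False (\<lambda>k n m. m = 0) w
    else if p = 3 then CS False False (\<lambda>_ _ _. True) w \<or> CS True False (\<lambda>_ _ _. True) w \<or> LX w
    else if p = 4 then CS True False (\<lambda>_ _ _. True) w \<or> CS True True (\<lambda>_ _ _. True) w
    else if p = 5 then CS True True (\<lambda>_ _ _. True) w \<or> CS False True (\<lambda>_ _ _. True) w
    else if p = 6 then CS False True (\<lambda>_ _ _. True) w \<or> CS False False (\<lambda>k n m. 1 \<le> m) w
    else if p = 7 then YT w \<or> CS False False (\<lambda>k n m. k \<noteq> KB) w \<or> CS False False (\<lambda>k n m. k = KB \<and> n = 0) w \<or> XS w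
    else if p = 8 then LX w \<or> XS w \<or> X0 w \<or> Y0 w
    else False)"

definition IC :: "nat \<Rightarrow> ('a + nat) list \<Rightarrow> bool" where
  "IC p w = (if p = 0 then X0 w \<or> Y0 w \<or> XM w \<or> YM w
    else if p = 1 then XJ w \<or> YJ w \<or> ENJ w
    else if p = 2 then YT w \<or> CS False False (\<lambda>k n m. m = 0) w
    else if p = 8 then IE 8 w \<or> EN w
    else IE p w)"

end

lemma subst_absent: "w' \<in> rule_app (Subst a b) m w \<Longrightarrow> a \<notin> set w \<Longrightarrow> w' = w"
  by simp

lemma Ssym_notInl[simp]: "Ssym k ps n \<notin> Inl ` A" "Tsym pt m \<notin> Inl ` A" "Ssym k ps n \<noteq> Inl c" "Tsym pt m \<noteq> Inl c"
  by (auto simp: Ssym_def Tsym_def split: skind.splits)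
lemma Ssym_Tsym[simp]: "Ssym k ps n \<noteq> Tsym pt m" "Tsym pt m \<noteq> Ssym k ps n"
  by (auto simp: Ssym_def Tsym_def split: skind.splits)
lemma Tsym_eq[simp]: "Tsym p m = Tsym p' m' \<longleftrightarrow> p = p' \<and> m = m'"
  by (auto simp: Tsym_def)
lemma MJ_ne[simp]: "sy MJ \<noteq> Ssym k ps n" "sy MJ \<noteq> Tsym pt m"
  by (auto simp: Ssym_def Tsym_def split: skind.splits)

context tagsound begin

lemma ev0: assumes "IE 0 w" "\<sigma> \<in> rl 0" "w' \<in> rule_app \<sigma> (nm 0) w" shows "IC 0 w'"
proof -
  obtain c where \<sigma>: "\<sigma> = Subst (Inl c) (sy (MSB (e c 0)))" "c \<in> V - {H}"
    using assms(2) by (auto simp: rl_def rMK_def)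
  from subst_cases[OF assms(3)[unfolded \<sigma>(1)]] show ?thesis
  proof
    assume "Inl c \<notin> set w \<and> w' = w" then show ?thesis using assms(1) by (auto simp: IE_def IC_def)
  next
    assume "\<exists>u v. w = u @ Inl c # v \<and> w' = u @ sy (MSB (e c 0)) # v"
    then obtain u v where uv: "w = u @ Inl c # v" "w' = u @ sy (MSB (e c 0)) # v" by blast
    from assms(1) have "X0 w \<or> Y0 w" by (simp add: IE_def)
    then show ?thesis
    proof
      assume "X0 w" then obtain u0 where u0: "u0 \<in> R" "w = L u0" by (auto simp: X0_def)
      from Inl_split[of u c v u0 "[]"] uv(1) u0(2) obtain t1 t2 where
        t: "u0 = t1 @ c # t2" "u = L t1" "v = L t2" by auto
      have "XM w'" unfolding XM_def using u0(1) uv(2) t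
        by (intro exI[of _ t1] exI[of _ c] exI[of _ t2]) simp
      then show ?thesis by (simp add: IC_def)
    next
      assume "Y0 w" then obtain x y r where xyr: "x # y # r \<in> R" "w = L (y # r) @ [ysy x]" by (auto simp: Y0_def)
      from Inl_split[of u c v "y # r" "[ysy x]"] uv(1) xyr(2) obtain t1 t2 where
        t: "y # r = t1 @ c # t2" "u = L t1" "v = L t2 @ [ysy x]" by (auto simp: ysy_def)
      have "YM w'" unfolding YM_def using xyr(1) uv(2) t
        by (intro exI[of _ x] exI[of _ y] exI[of _ r] exI[of _ t1] exI[of _ c] exI[of _ t2]) simp
      then show ?thesis by (simp add: IC_def)
    qed
  qed
qed

lemma ev1: assumes "IE 1 w" "\<sigma> \<in> rl 1" "w' \<in> rule_app \<sigma> (nm 1) w" shows "IC 1 w'"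
proof -
  have "\<sigma> = Ins (sy MJ)" using assms(2) by (simp add: rl_def rIN_def)
  then have w': "w' = w @ [sy MJ]" using assms(3) by (simp add: nm_def)
  show ?thesis using assms(1) w' by (auto simp: IE_def IC_def XJ_def YJ_def ENJ_def)
qed

lemma ev2: assumes "IE 2 w" "\<sigma> \<in> rl 2" "w' \<in> rule_app \<sigma> (nm 2) w" shows "IC 2 w'"
proof -
  have \<sigma>: "\<sigma> = Subst (sy MJ) (sy (MTT 0))" using assms(2) by (simp add: rl_def rZ_def)
  note r = assms(3)[unfolded \<sigma>]
  from assms(1) have "XJ w \<or> YJ w \<or> ENJ w \<or> YT w \<or> CS False False (\<lambda>k n m. m = 0) w" by (simp add: IE_def)
  then show ?thesis
  proof (elim disjE)
    assume "XJ w"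
    then obtain u1 a u2 where a: "u1 @ a # u2 \<in> R" "w = (L u1 @ sy (MSB (e a 0)) # L u2) @ sy MJ # []"
      by (auto simp: XJ_def XM_def)
    from subst_at[OF r[unfolded a(2)]] have "w' = (L u1 @ sy (MSB (e a 0)) # L u2) @ [sy (MTT 0)]" by auto
    then have "CS False False (\<lambda>k n m. m = 0) w'" unfolding CS_def ctr_ok_def using a(1)
      by (intro exI[of _ KB] exI[of _ u1] exI[of _ u2] exI[of _ "e a 0"] exI[of _ 0] exI[of _ "e a 0"])
        (auto simp: cw_def Ssym_def Tsym_def)
    then show ?thesis by (simp add: IC_def)
  next
    assume "YJ w"
    then obtain w0 where a: "YM w0" "w = w0 @ sy MJ # []" by (auto simp: YJ_def)
    have nMJ: "sy MJ \<notin> set w0" using a(1) by (auto simp: YM_def ysy_def)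
    have "w' = w0 @ [sy (MTT 0)]" using subst_at[OF r[unfolded a(2)]] nMJ by auto
    then show ?thesis using a(1) by (auto simp: IC_def YT_def)
  next
    assume "ENJ w"
    then obtain x y r i where a: "x # y # r \<in> R" "0 < i" "Suc i < length (phi x)"
      "w = (L (r @ take i (phi x)) @ [sy (MSL (code (phi x ! i)) (e x (Suc i)))]) @ sy MJ # []"
      by (auto simp: ENJ_def EN_def)
    from subst_at[OF r[unfolded a(4)]] have "w' = (L (r @ take i (phi x)) @ [sy (MSL (code (phi x ! i)) (e x (Suc i)))]) @ [sy (MTT 0)]" by auto
    then have "CS False False (\<lambda>k n m. m = 0) w'" unfolding CS_def ctr_ok_def using a(1,3)
      by (intro exI[of _ "KL (code (phi x ! i))"] exI[of _ "r @ take i (phi x)"] exI[of _ "[]"]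
          exI[of _ "e x (Suc i)"] exI[of _ 0] exI[of _ "e x (Suc i)"])
        (auto simp: cw_def Ssym_def Tsym_def)
    then show ?thesis by (simp add: IC_def)
  next
    assume "YT w"
    then have "sy MJ \<notin> set w" by (auto simp: YT_def YM_def ysy_def)
    then have "w' = w" using subst_absent[OF r] by blast
    then show ?thesis using \<open>YT w\<close> by (simp add: IC_def)
  next
    assume c: "CS False False (\<lambda>k n m. m = 0) w"
    then have "sy MJ \<notin> set w" by (auto simp: CS_def cw_def)
    then have "w' = w" using subst_absent[OF r] by blast
    then show ?thesis using c by (simp add: IC_def)
  qed
qed


lemma CS_I: "ctr_ok k \<alpha> \<beta> tot \<Longrightarrow> n + m + (if ps \<and> \<not> pt then 1 else 0) = tot \<Longrightarrow> (pt \<longrightarrow> 1 \<le> m) \<Longrightarrow> Q k n m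
   \<Longrightarrow> w = cw k \<alpha> \<beta> n m ps pt \<Longrightarrow> CS ps pt Q w"
  unfolding CS_def by blast

lemma CS_E: assumes "CS ps pt Q w"
  obtains k \<alpha> \<beta> n m tot where "ctr_ok k \<alpha> \<beta> tot" "n + m + (if ps \<and> \<not> pt then 1 else 0) = tot"
    "pt \<longrightarrow> 1 \<le> m" "Q k n m" "w = cw k \<alpha> \<beta> n m ps pt"
  using assms unfolding CS_def by blast

lemma set_cw2: "set (cw k \<alpha> \<beta> n m ps pt) = Inl ` set \<alpha> \<union> Inl ` set \<beta> \<union> {Ssym k ps n, Tsym pt m}"
  by (auto simp: cw_def)

lemma ev3: assumes "IE 3 w" "\<sigma> \<in> rl 3" "w' \<in> rule_app \<sigma> (nm 3) w" shows "IC 3 w'"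
proof -
  obtain a b where \<sigma>: "\<sigma> = Subst a b" and ab: "(\<exists>n'. a = sy (MSB n') \<and> b = sy (MSBp (n' - 1)) \<and> 0 < n') \<or>
      (\<exists>c n'. a = sy (MSL c n') \<and> b = sy (MSLp c (n' - 1)) \<and> 0 < n') \<or> (\<exists>p. a = sy (MSL (code p) 0) \<and> b = Inl p \<and> p \<in> V)"
    using assms(2) by (auto simp: rl_def rDEC_def)
  have aI: "a \<notin> Inl ` A" for A using ab by auto
  have aT: "a \<noteq> Tsym pt m" for pt m using ab by (auto simp: Tsym_def)
  have aSp: "a \<noteq> Ssym k True n" for k n using ab by (auto simp: Ssym_def split: skind.splits)
  note r = assms(3)[unfolded \<sigma>]
  have IC3: "IC 3 v = IE 3 v" for v by (simp add: IC_def)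
  from assms(1) have "CS True False (\<lambda>_ _ _. True) w \<or> LX w \<or> CS False False (\<lambda>_ _ _. True) w" by (auto simp: IE_def)
  then show ?thesis
  proof (elim disjE)
    assume c: "CS True False (\<lambda>_ _ _. True) w"
    then have "a \<notin> set w" using aI aT aSp by (auto elim!: CS_E simp: set_cw2)
    then show ?thesis using subst_absent[OF r] assms(1) by (simp add: IC_def)
  next
    assume c: "LX w"
    have aTT: "a \<noteq> sy (MTT m)" for m using aT[of False m] by (simp add: Tsym_def)
    from c have "a \<notin> set w" using aI aTT by (auto simp: LX_def)
    then show ?thesis using subst_absent[OF r] assms(1) by (simp add: IC_def)
  next
    assume c: "CS False False (\<lambda>_ _ _. True) w"
    then obtain k \<alpha> \<beta> n m tot where ok: "ctr_ok k \<alpha> \<beta> tot" "n + m = tot" and w: "w = cw k \<alpha> \<beta> n m False False"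
      by (auto elim!: CS_E)
    have ws: "w = L \<alpha> @ Ssym k False n # (L \<beta> @ [Tsym False m])" using w by (simp add: cw_def)
    from subst_at[OF r[unfolded ws]] aI aT
    have "(a \<noteq> Ssym k False n \<and> w' = w) \<or> (a = Ssym k False n \<and> w' = L \<alpha> @ b # (L \<beta> @ [Tsym False m]))"
      using ws by auto
    then show ?thesis
    proof (elim disjE conjE)
      assume "w' = w" then show ?thesis using assms(1) by (simp add: IC_def)
    next
      assume as: "a = Ssym k False n" and w': "w' = L \<alpha> @ b # (L \<beta> @ [Tsym False m])"
      from ab show ?thesis
      proof (elim disjE exE conjE)
        fix n' assume a: "a = sy (MSB n')" "b = sy (MSBp (n' - 1))" "0 < n'"
        have "k = KB" "n = n'" using as a(1) by (auto simp: Ssym_def split: skind.splits)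
        then have "CS True False (\<lambda>_ _ _. True) w'"
          by (intro CS_I[OF ok(1), of "n - 1" m]) (use ok(2) a w' in \<open>auto simp: cw_def Ssym_def\<close>)
        then show ?thesis by (simp add: IE_def IC_def)
      next
        fix c n' assume a: "a = sy (MSL c n')" "b = sy (MSLp c (n' - 1))" "0 < n'"
        have "k = KL c" "n = n'" using as a(1) by (auto simp: Ssym_def split: skind.splits)
        then have "CS True False (\<lambda>_ _ _. True) w'"
          by (intro CS_I[OF ok(1), of "n - 1" m]) (use ok(2) a w' in \<open>auto simp: cw_def Ssym_def\<close>)
        then show ?thesis by (simp add: IE_def IC_def)
      next
        fix p assume a: "a = sy (MSL (code p) 0)" "b = Inl p" "p \<in> V"
        have kn: "k = KL (code p)" "n = 0" using as a(1) by (auto simp: Ssym_def split: skind.splits)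
        from ok(1)[unfolded ctr_ok_def] kn(1) obtain x y r i where
          xi: "x # y # r \<in> R" "Suc i < length (phi x)" "\<alpha> = r @ take i (phi x)" "\<beta> = []"
             "code (phi x ! i) = code p" "tot = e x (Suc i)"
          by auto
        have "phi x ! i \<in> set (phi x)" using xi(2) by simp
        hence "phi x ! i \<in> V" using Rx(6)[OF xi(1)] by blast
        hence pe: "phi x ! i = p" using xi(5) a(3) cinj by (auto dest: inj_onD)
        have tk: "take (Suc i) (phi x) = take i (phi x) @ [phi x ! i]"
          using xi(2) by (simp add: take_Suc_conv_app_nth)
        have "LX w'" unfolding LX_def
          by (intro exI[of _ x] exI[of _ y] exI[of _ r] exI[of _ i])
            (use xi w' a kn ok(2) pe tk in \<open>auto simp: Tsym_def\<close>)
        then show ?thesis by (simp add: IE_def IC_def)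
      qed
    qed
  qed
qed


lemma Ssym_eq[simp]: "Ssym k p n = Ssym k' p' n' \<longleftrightarrow> k = k' \<and> p = p' \<and> n = n'"
  by (auto simp: Ssym_def split: skind.splits)

lemma ev4: assumes "IE 4 w" "\<sigma> \<in> rl 4" "w' \<in> rule_app \<sigma> (nm 4) w" shows "IC 4 w'"
proof -
  obtain m' where \<sigma>: "\<sigma> = Subst (Tsym False m') (Tsym True (Suc m'))"
    using assms(2) by (auto simp: rl_def rINC_def Tsym_def)
  note r = assms(3)[unfolded \<sigma>]
  from assms(1) have "CS True False (\<lambda>_ _ _. True) w \<or> CS True True (\<lambda>_ _ _. True) w" by (simp add: IE_def)
  then show ?thesis
  proof (elim disjE)
    assume "CS True False (\<lambda>_ _ _. True) w"
    then obtain k \<alpha> \<beta> n m tot where ok: "ctr_ok k \<alpha> \<beta> tot" "n + m + 1 = tot" and w: "w = cw k \<alpha> \<beta> n m True False"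
      by (auto elim!: CS_E)
    have ws: "w = (L \<alpha> @ Ssym k True n # L \<beta>) @ Tsym False m # []" using w by (simp add: cw_def)
    from subst_at[OF r[unfolded ws]]
    have "(Tsym False m' \<noteq> Tsym False m \<and> w' = w) \<or> (m' = m \<and> w' = (L \<alpha> @ Ssym k True n # L \<beta>) @ [Tsym True (Suc m)])"
      using ws by auto
    then show ?thesis
    proof (elim disjE conjE)
      assume "w' = w" then show ?thesis using assms(1) by (simp add: IC_def)
    next
      assume "m' = m" "w' = (L \<alpha> @ Ssym k True n # L \<beta>) @ [Tsym True (Suc m)]"
      then have "CS True True (\<lambda>_ _ _. True) w'"
        by (intro CS_I[OF ok(1), of n "Suc m"]) (use ok(2) in \<open>auto simp: cw_def\<close>)
      then show ?thesis by (simp add: IE_def IC_def)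
    qed
  next
    assume c: "CS True True (\<lambda>_ _ _. True) w"
    then have "Tsym False m' \<notin> set w" by (auto elim!: CS_E simp: set_cw2)
    then show ?thesis using subst_absent[OF r] assms(1) by (simp add: IC_def)
  qed
qed

lemma ev5: assumes "IE 5 w" "\<sigma> \<in> rl 5" "w' \<in> rule_app \<sigma> (nm 5) w" shows "IC 5 w'"
proof -
  obtain k' n' where \<sigma>: "\<sigma> = Subst (Ssym k' True n') (Ssym k' False n')"
    using assms(2) by (auto simp: rl_def rUNS_def Ssym_def split: skind.splits) (metis skind.simps(4), metis skind.simps(5))
  note r = assms(3)[unfolded \<sigma>]
  from assms(1) have "CS True True (\<lambda>_ _ _. True) w \<or> CS False True (\<lambda>_ _ _. True) w" by (simp add: IE_def)
  then show ?thesis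
  proof (elim disjE)
    assume "CS True True (\<lambda>_ _ _. True) w"
    then obtain k \<alpha> \<beta> n m tot where ok: "ctr_ok k \<alpha> \<beta> tot" "n + m = tot" "1 \<le> m" and w: "w = cw k \<alpha> \<beta> n m True True"
      by (auto elim!: CS_E)
    have ws: "w = L \<alpha> @ Ssym k True n # (L \<beta> @ [Tsym True m])" using w by (simp add: cw_def)
    from subst_at[OF r[unfolded ws]]
    have "w' = w \<or> (k' = k \<and> n' = n \<and> w' = L \<alpha> @ Ssym k False n # (L \<beta> @ [Tsym True m]))"
      using ws by auto
    then show ?thesis
    proof (elim disjE conjE)
      assume "w' = w" then show ?thesis using assms(1) by (simp add: IC_def)
    next
      assume "k' = k" "n' = n" "w' = L \<alpha> @ Ssym k False n # (L \<beta> @ [Tsym True m])"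
      then have "CS False True (\<lambda>_ _ _. True) w'"
        by (intro CS_I[OF ok(1), of n m]) (use ok(2,3) in \<open>auto simp: cw_def\<close>)
      then show ?thesis by (simp add: IE_def IC_def)
    qed
  next
    assume c: "CS False True (\<lambda>_ _ _. True) w"
    then have "Ssym k' True n' \<notin> set w" by (auto elim!: CS_E simp: set_cw2)
    then show ?thesis using subst_absent[OF r] assms(1) by (simp add: IC_def)
  qed
qed

lemma ev6: assumes "IE 6 w" "\<sigma> \<in> rl 6" "w' \<in> rule_app \<sigma> (nm 6) w" shows "IC 6 w'"
proof -
  obtain m' where \<sigma>: "\<sigma> = Subst (Tsym True m') (Tsym False m')"
    using assms(2) by (auto simp: rl_def rUNT_def Tsym_def)
  note r = assms(3)[unfolded \<sigma>]
  from assms(1) have "CS False True (\<lambda>_ _ _. True) w \<or> CS False False (\<lambda>k n m. 1 \<le> m) w" by (simp add: IE_def)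
  then show ?thesis
  proof (elim disjE)
    assume "CS False True (\<lambda>_ _ _. True) w"
    then obtain k \<alpha> \<beta> n m tot where ok: "ctr_ok k \<alpha> \<beta> tot" "n + m = tot" "1 \<le> m" and w: "w = cw k \<alpha> \<beta> n m False True"
      by (auto elim!: CS_E)
    have ws: "w = (L \<alpha> @ Ssym k False n # L \<beta>) @ Tsym True m # []" using w by (simp add: cw_def)
    from subst_at[OF r[unfolded ws]]
    have "w' = w \<or> (m' = m \<and> w' = (L \<alpha> @ Ssym k False n # L \<beta>) @ [Tsym False m])"
      using ws by auto
    then show ?thesis
    proof (elim disjE conjE)
      assume "w' = w" then show ?thesis using assms(1) by (simp add: IC_def)
    next
      assume "m' = m" "w' = (L \<alpha> @ Ssym k False n # L \<beta>) @ [Tsym False m]"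
      then have "CS False False (\<lambda>k n m. 1 \<le> m) w'"
        by (intro CS_I[OF ok(1), of n m]) (use ok(2,3) in \<open>auto simp: cw_def\<close>)
      then show ?thesis by (simp add: IE_def IC_def)
    qed
  next
    assume c: "CS False False (\<lambda>k n m. 1 \<le> m) w"
    then have "Tsym True m' \<notin> set w" by (auto elim!: CS_E simp: set_cw2)
    then show ?thesis using subst_absent[OF r] assms(1) by (simp add: IC_def)
  qed
qed


lemma cw_head: "cw k \<alpha> \<beta> n m ps pt = sy (MSB n') # w' \<Longrightarrow> \<alpha> = [] \<and> k = KB \<and> ps = False \<and> n = n' \<and> w' = L \<beta> @ [Tsym pt m]"
  by (cases \<alpha>) (auto simp: cw_def Ssym_def split: skind.splits if_splits)

lemma ev7: assumes "IE 7 w" "\<sigma> \<in> rl 7" "w' \<in> rule_app \<sigma> (nm 7) w" shows "IC 7 w'"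
proof -
  obtain n' where \<sigma>: "\<sigma> = Del (sy (MSB n'))" using assms(2) by (auto simp: rl_def rDELL_def)
  have "w' = w \<or> w = sy (MSB n') # w'" using del_cases assms(3) \<sigma> by (simp add: nm_def)
  then show ?thesis
  proof
    assume "w' = w" then show ?thesis using assms(1) by (simp add: IC_def)
  next
    assume wh: "w = sy (MSB n') # w'"
    from assms(1) have "YT w \<or> CS False False (\<lambda>k n m. k \<noteq> KB) w \<or> CS False False (\<lambda>k n m. k = KB \<and> n = 0) w \<or> XS w"
      by (simp add: IE_def)
    then show ?thesis
    proof (elim disjE)
      assume "YT w"
      then obtain x y r v1 b v2 where a: "x # y # r \<in> R" "y # r = v1 @ b # v2"
        "w = (L v1 @ sy (MSB (e b 0)) # L v2 @ [ysy x]) @ [sy (MTT 0)]"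
        by (auto simp: YT_def YM_def)
      have v1: "v1 = []" using a(3) wh by (cases v1) auto
      hence v2: "v2 = r" using a(2) by simp
      have w': "w' = L r @ [ysy x, sy (MTT 0)]" using a(3) wh v1 v2 by simp
      have lx: "Suc 0 < length (phi x)" using Rx(5)[OF a(1)] by simp
      have ok: "ctr_ok (KL (code (phi x ! 0))) r [] (e x 1)" unfolding ctr_ok_def
        using a(1) lx by (intro disjI2 exI[of _ x] exI[of _ y] exI[of _ r] exI[of _ 0]) simp
      have "CS False False (\<lambda>k n m. k \<noteq> KB) w'"
        by (intro CS_I[OF ok, of "e x 1" 0]) (use w' in \<open>auto simp: cw_def ysy_def Ssym_def Tsym_def\<close>)
      then show ?thesis by (simp add: IE_def IC_def)
    next
      assume "CS False False (\<lambda>k n m. k \<noteq> KB) w"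
      then obtain k \<alpha> \<beta> n m tot where "k \<noteq> KB" "w = cw k \<alpha> \<beta> n m False False" by (auto elim!: CS_E)
      then show ?thesis using wh cw_head by blast
    next
      assume "CS False False (\<lambda>k n m. k = KB \<and> n = 0) w"
      then obtain k \<alpha> \<beta> n m tot where ok: "ctr_ok k \<alpha> \<beta> tot" "n + m = tot" "k = KB" "n = 0"
        and w: "w = cw k \<alpha> \<beta> n m False False" by (auto elim!: CS_E)
      from cw_head[OF w[symmetric, unfolded wh]] have h: "\<alpha> = []" "w' = L \<beta> @ [Tsym False m]" by auto
      from ok(1)[unfolded ctr_ok_def] ok(3) obtain a where a: "\<alpha> @ a # \<beta> \<in> R" "tot = e a 0" by auto
      have "\<beta> \<noteq> []" using Ru(4)[OF a(1)] h(1) by simp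
      then obtain y r where \<beta>: "\<beta> = y # r" by (cases \<beta>) auto
      have "XS w'" unfolding XS_def using a h \<beta> ok
        by (intro exI[of _ a] exI[of _ y] exI[of _ r]) (simp add: Tsym_def)
      then show ?thesis by (simp add: IE_def IC_def)
    next
      assume "XS w"
      then show ?thesis using wh by (auto simp: XS_def)
    qed
  qed
qed

lemma ev8: assumes "IE 8 w" "\<sigma> \<in> rl 8" "w' \<in> rule_app \<sigma> (nm 8) w" shows "IC 8 w'"
proof -
  obtain x' i' b where \<sigma>: "\<sigma> = Subst (sy (MTT (e x' i'))) b" "x' \<in> V - {H}"
    and bb: "(b = sy (MSL (code (phi x' ! i')) (e x' (Suc i'))) \<and> Suc i' < length (phi x')) \<or>
        (b = Inl (phi x' ! i') \<and> Suc i' = length (phi x'))"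
    using assms(2) by (auto simp: rl_def rEMIT_def)
  note r = assms(3)[unfolded \<sigma>(1)]
  from assms(1) have "X0 w \<or> Y0 w \<or> XS w \<or> LX w" by (auto simp: IE_def)
  then show ?thesis
  proof (elim disjE)
    assume "X0 w"
    then have "sy (MTT (e x' i')) \<notin> set w" by (auto simp: X0_def)
    then show ?thesis using subst_absent[OF r] assms(1) by (simp add: IC_def)
  next
    assume "Y0 w"
    then have "sy (MTT (e x' i')) \<notin> set w" by (auto simp: Y0_def ysy_def)
    then show ?thesis using subst_absent[OF r] assms(1) by (simp add: IC_def)
  next
    assume "XS w"
    then obtain x y r where a: "x # y # r \<in> R" "w = L (y # r) @ sy (MTT (e x 0)) # []" by (auto simp: XS_def)
    have xV: "x \<in> V" using Rx(1)[OF a(1)] by simp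
    from subst_at[OF r[unfolded a(2)]]
    have "w' = w \<or> (x' = x \<and> i' = 0 \<and> w' = L (y # r) @ [b])" using a(2) xV \<sigma>(2) by auto
    then show ?thesis
    proof (elim disjE conjE)
      assume "w' = w" then show ?thesis using assms(1) by (simp add: IC_def)
    next
      assume h: "x' = x" "i' = 0" "w' = L (y # r) @ [b]"
      have "2 \<le> length (phi x)" using Rx(5)[OF a(1)] .
      then have "b = ysy x" using bb h by (auto simp: ysy_def)
      then have "Y0 w'" unfolding Y0_def using a(1) h(3) by blast
      then show ?thesis by (simp add: IE_def IC_def)
    qed
  next
    assume "LX w"
    then obtain x y r i where a: "x # y # r \<in> R" "Suc i < length (phi x)"
      "w = L (r @ take (Suc i) (phi x)) @ sy (MTT (e x (Suc i))) # []" by (auto simp: LX_def)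
    have xV: "x \<in> V" using Rx(1)[OF a(1)] by simp
    from subst_at[OF r[unfolded a(3)]]
    have "w' = w \<or> (x' = x \<and> i' = Suc i \<and> w' = L (r @ take (Suc i) (phi x)) @ [b])" using a(3) xV \<sigma>(2) by auto
    then show ?thesis
    proof (elim disjE conjE)
      assume "w' = w" then show ?thesis using assms(1) by (simp add: IC_def)
    next
      assume h: "x' = x" "i' = Suc i" "w' = L (r @ take (Suc i) (phi x)) @ [b]"
      from bb h show ?thesis
      proof (elim disjE conjE)
        assume b: "b = sy (MSL (code (phi x' ! i')) (e x' (Suc i')))" "Suc i' < length (phi x')"
        have "EN w'" unfolding EN_def using a(1) b h
          by (intro exI[of _ x] exI[of _ y] exI[of _ r] exI[of _ "Suc i"]) simp
        then show ?thesis by (simp add: IC_def)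
      next
        assume b: "b = Inl (phi x' ! i')" "Suc i' = length (phi x')"
        have tk: "take (Suc (Suc i)) (phi x) = take (Suc i) (phi x) @ [phi x ! Suc i]"
          by (rule take_Suc_conv_app_nth) (use b h in simp)
        have t2: "take (Suc (Suc i)) (phi x) = phi x" using b h by simp
        have e1: "w' = L (r @ take (Suc i) (phi x) @ [phi x ! Suc i])" using h b by simp
        have eq: "r @ take (Suc i) (phi x) @ [phi x ! Suc i] = r @ phi x" using tk t2 by simp
        have "w' = L (r @ phi x)" by (simp only: e1 eq)
        then have "X0 w'" unfolding X0_def using Rx(7)[OF a(1)] by blast
        then show ?thesis by (simp add: IE_def IC_def)
      qed
    qed
  qed
qed


lemma Nd_cases: assumes "q \<in> Nd"
  obtains "q = 0" | "q = 1" | "q = 2" | "q = 3" | "q = 4" | "q = 5" | "q = 6" | "q = 7" | "q = 8" | "q = 9"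
proof -
  have "q \<le> 9" using assms by (simp add: Nd_def)
  then have "q = 0 \<or> q = 1 \<or> q = 2 \<or> q = 3 \<or> q = 4 \<or> q = 5 \<or> q = 6 \<or> q = 7 \<or> q = 8 \<or> q = 9" by presburger
  then show ?thesis using that by blast
qed

lemmas fsimps = filt_weak filt_strong ball_Un bex_Un fsets cls_mem Y1p_def NSB_def em_def ef_def
  doubleton_eq_iff set_cw2 Ssym_def Tsym_def IE_def

lemma CS_bounds: assumes "CS ps pt Q w"
  obtains k \<alpha> \<beta> n m tot where "ctr_ok k \<alpha> \<beta> tot" "n + m + (if ps \<and> \<not> pt then 1 else 0) = tot"
    "pt \<longrightarrow> 1 \<le> m" "Q k n m" "w = cw k \<alpha> \<beta> n m ps pt" "n \<le> Emax" "m \<le> Emax" "tot \<le> Emax"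
    "k = KB \<or> (\<exists>c\<in>code ` V. k = KL c)"
proof -
  from assms obtain k \<alpha> \<beta> n m tot where a: "ctr_ok k \<alpha> \<beta> tot" "n + m + (if ps \<and> \<not> pt then 1 else 0) = tot"
    "pt \<longrightarrow> 1 \<le> m" "Q k n m" "w = cw k \<alpha> \<beta> n m ps pt" by (rule CS_E)
  have "tot \<le> Emax" "kok k" using ctr_facts[OF a(1)] by auto
  then show ?thesis using that[OF a] a(2) by (auto simp: kok_def)
qed

lemma CS_ex: assumes "CS ps pt Q w"
  shows "\<exists>k \<alpha> \<beta> n m tot. ctr_ok k \<alpha> \<beta> tot \<and> n + m + (if ps \<and> \<not> pt then 1 else 0) = tot \<and>
    (pt \<longrightarrow> 1 \<le> m) \<and> Q k n m \<and> w = cw k \<alpha> \<beta> n m ps pt \<and> n \<le> Emax \<and> m \<le> Emax \<and>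
    (k = KB \<or> (\<exists>c\<in>code ` V. k = KL c))"
proof -
  obtain k \<alpha> \<beta> n m tot where a: "ctr_ok k \<alpha> \<beta> tot" "n + m + (if ps \<and> \<not> pt then 1 else 0) = tot"
    "pt \<longrightarrow> 1 \<le> m" "Q k n m" "w = cw k \<alpha> \<beta> n m ps pt" "n \<le> Emax" "m \<le> Emax" "tot \<le> Emax"
    "k = KB \<or> (\<exists>c\<in>code ` V. k = KL c)"
    by (rule CS_bounds[OF assms])
  show ?thesis
    apply (rule exI[of _ k], rule exI[of _ \<alpha>], rule exI[of _ \<beta>], rule exI[of _ n], rule exI[of _ m], rule exI[of _ tot])
    using a by (simp only: simp_thms)
qed

lemma nb3: assumes "q \<in> Nd" "q \<noteq> 3" "filt_word (em {3,q}) w (ef {3,q})"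
  shows "(q = 2 \<and> filt_word FWeak w (T0, JJ \<union> Y1 \<union> Spr \<union> Tpall)) \<or>
    (q = 4 \<and> filt_word FWeak w (Spr, Tpall \<union> JJ)) \<or>
    (q = 7 \<and> filt_word FWeak w (SB0 \<union> Y1, Spr \<union> Tpall \<union> JJ \<union> SBpos)) \<or>
    (q = 8 \<and> filt_word FWeak w (TEpos, Sun \<union> Spr \<union> JJ \<union> Tpall)) \<or>
    (q = 6 \<and> filt_word FWeak w (Sun, Spr \<union> Tpall \<union> JJ \<union> T0))"
  using assms(1) by (cases rule: Nd_cases) (use assms(2,3) in \<open>simp_all add: em_def ef_def doubleton_eq_iff\<close>)

lemma nb0: assumes "q \<in> Nd" "q \<noteq> 0" "filt_word (em {0,q}) w (ef {0,q})"
  shows "(q = 1 \<and> filt_word FWeak w (SBall, JJ)) \<or>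
    (q = 8 \<and> filt_word FWeak w (Inl ` V \<union> Y1, SBall \<union> Tall \<union> JJ \<union> Spr \<union> Tpall \<union> SLnY)) \<or>
    (q = 9 \<and> filt_word FStrong w ({}, NSB))"
  using assms(1) by (cases rule: Nd_cases) (use assms(2,3) in \<open>simp_all add: em_def ef_def doubleton_eq_iff\<close>)

lemma nb1: assumes "q \<in> Nd" "q \<noteq> 1" "filt_word (em {1,q}) w (ef {1,q})"
  shows "(q = 0 \<and> filt_word FWeak w (SBall, JJ)) \<or>
    (q = 2 \<and> filt_word FWeak w (JJ, {})) \<or>
    (q = 8 \<and> filt_word FWeak w (SLnY, JJ \<union> Tall \<union> SBall \<union> Y1 \<union> Spr \<union> Tpall))"
  using assms(1) by (cases rule: Nd_cases) (use assms(2,3) in \<open>simp_all add: em_def ef_def doubleton_eq_iff\<close>)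

lemma nb2: assumes "q \<in> Nd" "q \<noteq> 2" "filt_word (em {2,q}) w (ef {2,q})"
  shows "(q = 1 \<and> filt_word FWeak w (JJ, {})) \<or>
    (q = 3 \<and> filt_word FWeak w (T0, JJ \<union> Y1 \<union> Spr \<union> Tpall)) \<or>
    (q = 7 \<and> filt_word FWeak w (Y1, JJ \<union> Spr \<union> Tpall \<union> Tpos))"
  using assms(1) by (cases rule: Nd_cases) (use assms(2,3) in \<open>simp_all add: em_def ef_def doubleton_eq_iff\<close>)

lemma nb4: assumes "q \<in> Nd" "q \<noteq> 4" "filt_word (em {4,q}) w (ef {4,q})"
  shows "(q = 3 \<and> filt_word FWeak w (Spr, Tpall \<union> JJ)) \<or>
    (q = 5 \<and> filt_word FWeak w (Tpall, JJ \<union> Sun))"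
  using assms(1) by (cases rule: Nd_cases) (use assms(2,3) in \<open>simp_all add: em_def ef_def doubleton_eq_iff\<close>)

lemma nb5: assumes "q \<in> Nd" "q \<noteq> 5" "filt_word (em {5,q}) w (ef {5,q})"
  shows "(q = 4 \<and> filt_word FWeak w (Tpall, JJ \<union> Sun)) \<or>
    (q = 6 \<and> filt_word FWeak w (Sun, Spr \<union> JJ \<union> Tall))"
  using assms(1) by (cases rule: Nd_cases) (use assms(2,3) in \<open>simp_all add: em_def ef_def doubleton_eq_iff\<close>)

lemma nb6: assumes "q \<in> Nd" "q \<noteq> 6" "filt_word (em {6,q}) w (ef {6,q})"
  shows "(q = 3 \<and> filt_word FWeak w (Sun, Spr \<union> Tpall \<union> JJ \<union> T0)) \<or>
    (q = 5 \<and> filt_word FWeak w (Sun, Spr \<union> JJ \<union> Tall))"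
  using assms(1) by (cases rule: Nd_cases) (use assms(2,3) in \<open>simp_all add: em_def ef_def doubleton_eq_iff\<close>)

lemma nb7: assumes "q \<in> Nd" "q \<noteq> 7" "filt_word (em {7,q}) w (ef {7,q})"
  shows "(q = 2 \<and> filt_word FWeak w (Y1, JJ \<union> Spr \<union> Tpall \<union> Tpos)) \<or>
    (q = 3 \<and> filt_word FWeak w (SB0 \<union> Y1, Spr \<union> Tpall \<union> JJ \<union> SBpos)) \<or>
    (q = 8 \<and> filt_word FWeak w (TE0, Sun \<union> Spr \<union> JJ \<union> Tpall)) \<or>
    (q = 9 \<and> filt_word FWeak w (THs, Sun \<union> Spr \<union> JJ \<union> Tpall))"
  using assms(1) by (cases rule: Nd_cases) (use assms(2,3) in \<open>simp_all add: em_def ef_def doubleton_eq_iff\<close>)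

lemma nb8: assumes "q \<in> Nd" "q \<noteq> 8" "filt_word (em {8,q}) w (ef {8,q})"
  shows "(q = 0 \<and> filt_word FWeak w (Inl ` V \<union> Y1, SBall \<union> Tall \<union> JJ \<union> Spr \<union> Tpall \<union> SLnY)) \<or>
    (q = 1 \<and> filt_word FWeak w (SLnY, JJ \<union> Tall \<union> SBall \<union> Y1 \<union> Spr \<union> Tpall)) \<or>
    (q = 3 \<and> filt_word FWeak w (TEpos, Sun \<union> Spr \<union> JJ \<union> Tpall)) \<or>
    (q = 7 \<and> filt_word FWeak w (TE0, Sun \<union> Spr \<union> JJ \<union> Tpall))"
  using assms(1) by (cases rule: Nd_cases) (use assms(2,3) in \<open>simp_all add: em_def ef_def doubleton_eq_iff\<close>)


lemma R_cons: "u \<in> R \<Longrightarrow> \<exists>x y r. u = x # y # r"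
  using R_good[of u] by (cases u; cases "tl u") auto

lemma Y1p_simps[simp]: "\<not> Y1p (MSB n)" "\<not> Y1p (MSBp n)" "\<not> Y1p (MSLp c n)" "\<not> Y1p (MTT n)" "\<not> Y1p (MTTp n)" "\<not> Y1p MJ"
  by (auto simp: Y1p_def)

lemmas mvs = filt_weak filt_strong ball_Un bex_Un fsets cls_mem NSB_def IE_def

lemma ysy_facts: assumes "x # y # r \<in> R"
  shows "ysy x \<in> Y1" "ysy x \<notin> SLnY" "ysy x \<in> cls (\<lambda>m. \<forall>n. m \<noteq> MSB n)"
proof -
  have xV: "x \<in> V - {H}" and l: "2 \<le> length (phi x)" using Rx[OF assms] by auto
  have "phi x ! 0 \<in> set (phi x)" by (rule nth_mem) (use l in \<open>cases "phi x"; simp\<close>)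
  hence p0: "phi x ! 0 \<in> V" using Rx(6)[OF assms] by blast
  have E: "e x 1 \<le> Emax" using xV l by (intro e_le) auto
  have Y: "Y1p (MSL (code (phi x ! 0)) (e x 1))" using xV by (auto simp: Y1p_def)
  show "ysy x \<in> Y1" "ysy x \<notin> SLnY" "ysy x \<in> cls (\<lambda>m. \<forall>n. m \<noteq> MSB n)"
    using p0 E Y by (auto simp: ysy_def fsets)
qed

lemma CS_FF: assumes "CS False False Q w"
  shows "\<exists>k \<alpha> \<beta> n m tot. ctr_ok k \<alpha> \<beta> tot \<and> n + m = tot \<and> Q k n m \<and> w = cw k \<alpha> \<beta> n m False False \<and>
    n \<le> Emax \<and> m \<le> Emax \<and> (k = KB \<or> (\<exists>c\<in>code ` V. k = KL c))"
  using CS_ex[OF assms] by simp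

lemma CS_TF: assumes "CS True False Q w"
  shows "\<exists>k \<alpha> \<beta> n m tot. ctr_ok k \<alpha> \<beta> tot \<and> Suc (n + m) = tot \<and> Q k n m \<and> w = cw k \<alpha> \<beta> n m True False \<and>
    n \<le> Emax \<and> m \<le> Emax \<and> (k = KB \<or> (\<exists>c\<in>code ` V. k = KL c))"
  using CS_ex[OF assms] by simp

lemma CS_TT: assumes "CS True True Q w"
  shows "\<exists>k \<alpha> \<beta> n m tot. ctr_ok k \<alpha> \<beta> tot \<and> n + m = tot \<and> 1 \<le> m \<and> Q k n m \<and> w = cw k \<alpha> \<beta> n m True True \<and>
    n \<le> Emax \<and> m \<le> Emax \<and> (k = KB \<or> (\<exists>c\<in>code ` V. k = KL c))"
  using CS_ex[OF assms] by simp

lemma CS_FT: assumes "CS False True Q w"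
  shows "\<exists>k \<alpha> \<beta> n m tot. ctr_ok k \<alpha> \<beta> tot \<and> n + m = tot \<and> 1 \<le> m \<and> Q k n m \<and> w = cw k \<alpha> \<beta> n m False True \<and>
    n \<le> Emax \<and> m \<le> Emax \<and> (k = KB \<or> (\<exists>c\<in>code ` V. k = KL c))"
  using CS_ex[OF assms] by simp

lemma mv0: assumes "IC 0 w" "q \<in> Nd" "q \<noteq> 0" "filt_word (em {0,q}) w (ef {0,q})" shows "IE q w"
proof -
  note nb = nb0[OF assms(2,3,4)]
  from assms(1) have "X0 w \<or> Y0 w \<or> XM w \<or> YM w" by (simp add: IC_def)
  then show ?thesis
  proof (elim disjE)
    assume c: "X0 w"
    then obtain u where u: "u \<in> R" "w = L u" by (auto simp: X0_def)
    then obtain x y r where xyr: "u = x # y # r" using R_cons by blast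
    have xV: "x \<in> V" using Rx(1) u(1) xyr by auto
    show ?thesis using nb c u xyr xV by (auto simp: mvs)
  next
    assume c: "Y0 w"
    then obtain x y r where a: "x # y # r \<in> R" "w = L (y # r) @ [ysy x]" by (auto simp: Y0_def)
    have yV: "y \<in> V" using Rx(2)[OF a(1)] by auto
    show ?thesis using nb c a yV ysy_facts[OF a(1)] by (auto simp: mvs ysy_def)
  next
    assume c: "XM w"
    then obtain u1 a u2 where a: "u1 @ a # u2 \<in> R" "w = L u1 @ sy (MSB (e a 0)) # L u2" by (auto simp: XM_def)
    have E: "e a 0 \<le> Emax" using Ru(1)[OF a(1)] by (intro e_le) auto
    have ne: "\<exists>c\<in>set u1 \<union> set u2. c \<in> V" using Ru(2,3,4)[OF a(1)] by (cases u1; cases u2) auto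
    show ?thesis using nb c a E ne by (auto simp: mvs)
  next
    assume c: "YM w"
    then obtain x y r v1 b v2 where a: "x # y # r \<in> R" "y # r = v1 @ b # v2"
      "w = L v1 @ sy (MSB (e b 0)) # L v2 @ [ysy x]" by (auto simp: YM_def)
    have "b \<in> V - {H}" using Rx(2,3)[OF a(1)] a(2) by (cases v1) auto
    hence E: "e b 0 \<le> Emax" by (intro e_le) auto
    show ?thesis using nb c a E ysy_facts[OF a(1)] by (auto simp: mvs)
  qed
qed

lemma mv1: assumes "IC 1 w" "q \<in> Nd" "q \<noteq> 1" "filt_word (em {1,q}) w (ef {1,q})" shows "IE q w"
proof -
  note nb = nb1[OF assms(2,3,4)]
  from assms(1) have c: "XJ w \<or> YJ w \<or> ENJ w" by (simp add: IC_def)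
  then obtain w0 where w: "w = w0 @ [sy MJ]" by (auto simp: XJ_def YJ_def ENJ_def)
  show ?thesis using nb c w by (auto simp: mvs)
qed

lemma IE_simps: "IE 0 w = (X0 w \<or> Y0 w)" "IE 1 w = (XM w \<or> YM w \<or> EN w)"
  "IE 2 w = (XJ w \<or> YJ w \<or> ENJ w \<or> YT w \<or> CS False False (\<lambda>k n m. m = 0) w)"
  "IE 3 w = (CS False False (\<lambda>_ _ _. True) w \<or> CS True False (\<lambda>_ _ _. True) w \<or> LX w)"
  "IE 4 w = (CS True False (\<lambda>_ _ _. True) w \<or> CS True True (\<lambda>_ _ _. True) w)"
  "IE 5 w = (CS True True (\<lambda>_ _ _. True) w \<or> CS False True (\<lambda>_ _ _. True) w)"
  "IE 6 w = (CS False True (\<lambda>_ _ _. True) w \<or> CS False False (\<lambda>k n m. 1 \<le> m) w)"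
  "IE 7 w = (YT w \<or> CS False False (\<lambda>k n m. k \<noteq> KB) w \<or> CS False False (\<lambda>k n m. k = KB \<and> n = 0) w \<or> XS w)"
  "IE 8 w = (LX w \<or> XS w \<or> X0 w \<or> Y0 w)" "IE 9 w = False"
  by (simp_all add: IE_def)

lemma Inl_cls_Int[simp]: "Inl ` A \<inter> cls P = {}" "cls P \<inter> Inl ` A = {}"
  by (auto simp: cls_def)

lemma ysy_ok: assumes "x # y # r \<in> R"
  shows "okm (MSL (code (phi x ! 0)) (e x 1))" "Y1p (MSL (code (phi x ! 0)) (e x 1))"
proof -
  have xV: "x \<in> V - {H}" and l: "2 \<le> length (phi x)" using Rx[OF assms] by auto
  have "phi x ! 0 \<in> set (phi x)" by (rule nth_mem) (use l in \<open>cases "phi x"; simp\<close>)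
  hence p0: "phi x ! 0 \<in> V" using Rx(6)[OF assms] by blast
  have E: "e x 1 \<le> Emax" using xV l by (intro e_le) auto
  show "okm (MSL (code (phi x ! 0)) (e x 1))" using p0 E by simp
  show "Y1p (MSL (code (phi x ! 0)) (e x 1))" using xV by (auto simp: Y1p_def)
qed

lemmas fs2 = filt_weak filt_strong ball_Un bex_Un fsets cls_mem NSB_def Int_Un_distrib Int_Un_distrib2 ysy_def

lemma mv2: assumes "IC 2 w" "q \<in> Nd" "q \<noteq> 2" "filt_word (em {2,q}) w (ef {2,q})" shows "IE q w"
proof -
  note nb = nb2[OF assms(2,3,4)]
  from assms(1) have "YT w \<or> CS False False (\<lambda>k n m. m = 0) w" by (simp add: IC_def)
  then show ?thesis
  proof (elim disjE)
    assume c: "YT w"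
    then obtain x y r v1 b v2 where a: "x # y # r \<in> R" "y # r = v1 @ b # v2"
      "w = L v1 @ sy (MSB (e b 0)) # L v2 @ [ysy x, sy (MTT 0)]" by (auto simp: YT_def YM_def)
    note Y = ysy_ok[OF a(1)]
    from nb show ?thesis
    proof (elim disjE conjE)
      assume "q = 1" "filt_word FWeak w (JJ, {})" then show ?thesis using a(3) by (simp add: fs2)
    next
      assume "q = 3" "filt_word FWeak w (T0, JJ \<union> Y1 \<union> Spr \<union> Tpall)" then show ?thesis using a(3) Y by (simp add: fs2)
    next
      assume "q = 7" then show ?thesis using c by (simp add: IE_simps)
    qed
  next
    assume c: "CS False False (\<lambda>k n m. m = 0) w"
    then obtain k \<alpha> \<beta> n m tot where ok: "ctr_ok k \<alpha> \<beta> tot" "n + m = tot" "m = 0" and w: "w = cw k \<alpha> \<beta> n m False False"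
      and b: "n \<le> Emax" "m \<le> Emax" "k = KB \<or> (\<exists>c\<in>code ` V. k = KL c)"
      using CS_FF[OF c] by blast
    have f1: "CS False False (\<lambda>_ _ _. True) w" by (rule CS_I[OF ok(1), of n m]) (use ok w in simp_all)
    have f3: "k \<noteq> KB \<Longrightarrow> CS False False (\<lambda>k n m. k \<noteq> KB) w" by (rule CS_I[OF ok(1), of n m]) (use ok w in simp_all)
    from nb show ?thesis
    proof (elim disjE conjE)
      assume "q = 1" "filt_word FWeak w (JJ, {})" then show ?thesis using w by (simp add: fs2 set_cw2 Ssym_def Tsym_def split: skind.splits)
    next
      assume "q = 3" then show ?thesis using f1 by (simp add: IE_simps)
    next
      assume "q = 7" "filt_word FWeak w (Y1, JJ \<union> Spr \<union> Tpall \<union> Tpos)"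
      then show ?thesis using w f3 by (cases k) (simp_all add: IE_simps fs2 set_cw2 Ssym_def Tsym_def)
    qed
  qed
qed


lemma CSFF_facts: assumes "CS False False Q w"
  obtains k \<alpha> \<beta> n m where "w = cw k \<alpha> \<beta> n m False False" "n \<le> Emax" "m \<le> Emax"
    "\<And>c. k = KL c \<Longrightarrow> c \<in> code ` V" "Q k n m"
    "CS False False (\<lambda>_ _ _. True) w" "m = 0 \<Longrightarrow> CS False False (\<lambda>k n m. m = 0) w"
    "1 \<le> m \<Longrightarrow> CS False False (\<lambda>k n m. 1 \<le> m) w"
    "k \<noteq> KB \<Longrightarrow> CS False False (\<lambda>k n m. k \<noteq> KB) w"
    "k = KB \<Longrightarrow> n = 0 \<Longrightarrow> CS False False (\<lambda>k n m. k = KB \<and> n = 0) w"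
proof -
  obtain k \<alpha> \<beta> n m tot where ok: "ctr_ok k \<alpha> \<beta> tot" "n + m = tot" "Q k n m" and w: "w = cw k \<alpha> \<beta> n m False False"
      and b: "n \<le> Emax" "m \<le> Emax" "k = KB \<or> (\<exists>c\<in>code ` V. k = KL c)"
    using CS_FF[OF assms] by blast
  have kc: "\<And>c. k = KL c \<Longrightarrow> c \<in> code ` V" using b(3) by auto
  have f1: "CS False False (\<lambda>_ _ _. True) w" by (rule CS_I[OF ok(1), of n m]) (use ok w in simp_all)
  have f2: "m = 0 \<Longrightarrow> CS False False (\<lambda>k n m. m = 0) w" by (rule CS_I[OF ok(1), of n m]) (use ok w in simp_all)
  have f3: "1 \<le> m \<Longrightarrow> CS False False (\<lambda>k n m. 1 \<le> m) w" by (rule CS_I[OF ok(1), of n m]) (use ok w in simp_all)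
  have f4: "k \<noteq> KB \<Longrightarrow> CS False False (\<lambda>k n m. k \<noteq> KB) w" by (rule CS_I[OF ok(1), of n m]) (use ok w in simp_all)
  have f5: "k = KB \<Longrightarrow> n = 0 \<Longrightarrow> CS False False (\<lambda>k n m. k = KB \<and> n = 0) w" by (rule CS_I[OF ok(1), of n m]) (use ok w in simp_all)
  show ?thesis by (rule that[OF w b(1,2) kc ok(3) f1 f2 f3 f4 f5])
qed

lemma CS_gen_facts: assumes "CS ps pt Q w"
  obtains k \<alpha> \<beta> n m where "w = cw k \<alpha> \<beta> n m ps pt" "n \<le> Emax" "m \<le> Emax"
    "\<And>c. k = KL c \<Longrightarrow> c \<in> code ` V" "pt \<longrightarrow> 1 \<le> m"
proof -
  obtain k \<alpha> \<beta> n m tot where a: "ctr_ok k \<alpha> \<beta> tot" "n + m + (if ps \<and> \<not> pt then 1 else 0) = tot"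
    "pt \<longrightarrow> 1 \<le> m" "Q k n m" "w = cw k \<alpha> \<beta> n m ps pt" "n \<le> Emax" "m \<le> Emax" "tot \<le> Emax"
    "k = KB \<or> (\<exists>c\<in>code ` V. k = KL c)"
    by (rule CS_bounds[OF assms])
  show ?thesis by (rule that[OF a(5,6,7) _ a(3)]) (use a(9) in auto)
qed

lemma IE_Suc0: "IE (Suc 0) w = (XM w \<or> YM w \<or> EN w)" by (simp add: IE_def)

lemmas fs3 = IE_Suc0 IE_simps fs2 set_cw2 Ssym_def Tsym_def

lemma LX_facts: assumes "LX w"
  obtains x y r i where "x # y # r \<in> R" "Suc i < length (phi x)" "x \<in> V - {H}"
    "w = L (r @ take (Suc i) (phi x)) @ [sy (MTT (e x (Suc i)))]" "e x (Suc i) \<le> Emax"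
proof -
  obtain x y r i where a: "x # y # r \<in> R" "Suc i < length (phi x)"
      "w = L (r @ take (Suc i) (phi x)) @ [sy (MTT (e x (Suc i)))]" using assms by (auto simp: LX_def)
  have xV: "x \<in> V - {H}" using Rx(1)[OF a(1)] .
  have E: "e x (Suc i) \<le> Emax" using xV a(2) by (intro e_le) auto
  show ?thesis by (rule that[OF a(1,2) xV a(3) E])
qed

lemma XS_facts: assumes "XS w"
  obtains x y r where "x # y # r \<in> R" "x \<in> V - {H}" "x \<notin> Hset" "y \<in> V"
    "w = L (y # r) @ [sy (MTT (e x 0))]" "e x 0 \<le> Emax"
proof -
  obtain x y r where a: "x # y # r \<in> R" "w = L (y # r) @ [sy (MTT (e x 0))]" using assms by (auto simp: XS_def)
  have E: "e x 0 \<le> Emax" using Rx(1)[OF a(1)] by (intro e_le) auto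
  show ?thesis by (rule that[OF a(1) Rx(1)[OF a(1)] Rx(4)[OF a(1)] _ a(2) E]) (use Rx(2)[OF a(1)] in auto)
qed

lemma mv3: assumes "IC 3 w" "q \<in> Nd" "q \<noteq> 3" "filt_word (em {3,q}) w (ef {3,q})" shows "IE q w"
proof -
  note nb = nb3[OF assms(2,3,4)]
  from assms(1) have "CS False False (\<lambda>_ _ _. True) w \<or> CS True False (\<lambda>_ _ _. True) w \<or> LX w"
    by (simp add: IC_def IE_def)
  then show ?thesis
  proof (elim disjE)
    assume c: "CS False False (\<lambda>_ _ _. True) w"
    obtain k \<alpha> \<beta> n m where F: "w = cw k \<alpha> \<beta> n m False False" "n \<le> Emax" "m \<le> Emax"
      "\<And>c. k = KL c \<Longrightarrow> c \<in> code ` V"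
      "CS False False (\<lambda>_ _ _. True) w" "m = 0 \<Longrightarrow> CS False False (\<lambda>k n m. m = 0) w"
      "1 \<le> m \<Longrightarrow> CS False False (\<lambda>k n m. 1 \<le> m) w"
      "k \<noteq> KB \<Longrightarrow> CS False False (\<lambda>k n m. k \<noteq> KB) w"
      "k = KB \<Longrightarrow> n = 0 \<Longrightarrow> CS False False (\<lambda>k n m. k = KB \<and> n = 0) w"
      by (rule CSFF_facts[OF c]) blast+
    from nb show ?thesis
      by (elim disjE conjE; cases k) (use F in \<open>simp_all add: fs3\<close>)
  next
    assume c: "CS True False (\<lambda>_ _ _. True) w"
    obtain k \<alpha> \<beta> n m where F: "w = cw k \<alpha> \<beta> n m True False" "n \<le> Emax" "m \<le> Emax"
      "\<And>c. k = KL c \<Longrightarrow> c \<in> code ` V" by (rule CS_gen_facts[OF c]) blast+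
    from nb show ?thesis
      by (elim disjE conjE; cases k) (use F c in \<open>simp_all add: fs3\<close>)
  next
    assume c: "LX w"
    obtain x y r i where F: "x # y # r \<in> R" "Suc i < length (phi x)" "x \<in> V - {H}"
      "w = L (r @ take (Suc i) (phi x)) @ [sy (MTT (e x (Suc i)))]" "e x (Suc i) \<le> Emax"
      by (rule LX_facts[OF c]) blast+
    from nb show ?thesis
      by (elim disjE conjE) (use F c in \<open>simp_all add: fs3\<close>)
  qed
qed


lemma mv4: assumes "IC 4 w" "q \<in> Nd" "q \<noteq> 4" "filt_word (em {4,q}) w (ef {4,q})" shows "IE q w"
proof -
  note nb = nb4[OF assms(2,3,4)]
  from assms(1) have "CS True False (\<lambda>_ _ _. True) w \<or> CS True True (\<lambda>_ _ _. True) w"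
    by (simp add: IC_def IE_def)
  then show ?thesis
  proof (elim disjE)
    assume c: "CS True False (\<lambda>_ _ _. True) w"
    obtain k \<alpha> \<beta> n m where F: "w = cw k \<alpha> \<beta> n m True False" "n \<le> Emax" "m \<le> Emax"
      "\<And>c. k = KL c \<Longrightarrow> c \<in> code ` V" by (rule CS_gen_facts[OF c]) blast+
    from nb show ?thesis by (elim disjE conjE; cases k) (use F c in \<open>simp_all add: fs3\<close>)
  next
    assume c: "CS True True (\<lambda>_ _ _. True) w"
    obtain k \<alpha> \<beta> n m where F: "w = cw k \<alpha> \<beta> n m True True" "n \<le> Emax" "m \<le> Emax"
      "\<And>c. k = KL c \<Longrightarrow> c \<in> code ` V" by (rule CS_gen_facts[OF c]) blast+
    from nb show ?thesis by (elim disjE conjE; cases k) (use F c in \<open>simp_all add: fs3\<close>)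
  qed
qed

lemma mv5: assumes "IC 5 w" "q \<in> Nd" "q \<noteq> 5" "filt_word (em {5,q}) w (ef {5,q})" shows "IE q w"
proof -
  note nb = nb5[OF assms(2,3,4)]
  from assms(1) have "CS True True (\<lambda>_ _ _. True) w \<or> CS False True (\<lambda>_ _ _. True) w"
    by (simp add: IC_def IE_def)
  then show ?thesis
  proof (elim disjE)
    assume c: "CS True True (\<lambda>_ _ _. True) w"
    obtain k \<alpha> \<beta> n m where F: "w = cw k \<alpha> \<beta> n m True True" "n \<le> Emax" "m \<le> Emax"
      "\<And>c. k = KL c \<Longrightarrow> c \<in> code ` V" by (rule CS_gen_facts[OF c]) blast+
    from nb show ?thesis by (elim disjE conjE; cases k) (use F c in \<open>simp_all add: fs3\<close>)
  next
    assume c: "CS False True (\<lambda>_ _ _. True) w"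
    obtain k \<alpha> \<beta> n m where F: "w = cw k \<alpha> \<beta> n m False True" "n \<le> Emax" "m \<le> Emax"
      "\<And>c. k = KL c \<Longrightarrow> c \<in> code ` V" by (rule CS_gen_facts[OF c]) blast+
    from nb show ?thesis by (elim disjE conjE; cases k) (use F c in \<open>simp_all add: fs3\<close>)
  qed
qed

lemma mv6: assumes "IC 6 w" "q \<in> Nd" "q \<noteq> 6" "filt_word (em {6,q}) w (ef {6,q})" shows "IE q w"
proof -
  note nb = nb6[OF assms(2,3,4)]
  from assms(1) have "CS False True (\<lambda>_ _ _. True) w \<or> CS False False (\<lambda>k n m. 1 \<le> m) w"
    by (simp add: IC_def IE_def)
  then show ?thesis
  proof (elim disjE)
    assume c: "CS False True (\<lambda>_ _ _. True) w"
    obtain k \<alpha> \<beta> n m where F: "w = cw k \<alpha> \<beta> n m False True" "n \<le> Emax" "m \<le> Emax"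
      "\<And>c. k = KL c \<Longrightarrow> c \<in> code ` V" by (rule CS_gen_facts[OF c]) blast+
    from nb show ?thesis by (elim disjE conjE; cases k) (use F c in \<open>simp_all add: fs3\<close>)
  next
    assume c: "CS False False (\<lambda>k n m. 1 \<le> m) w"
    obtain k \<alpha> \<beta> n m where F: "w = cw k \<alpha> \<beta> n m False False" "n \<le> Emax" "m \<le> Emax"
      "\<And>c. k = KL c \<Longrightarrow> c \<in> code ` V" "1 \<le> m"
      "CS False False (\<lambda>_ _ _. True) w" by (rule CSFF_facts[OF c]) blast+
    from nb show ?thesis by (elim disjE conjE; cases k) (use F c in \<open>simp_all add: fs3\<close>)
  qed
qed

lemma YT_facts: assumes "YT w"
  obtains x y r v1 b v2 where "x # y # r \<in> R" "y # r = v1 @ b # v2"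
    "w = L v1 @ sy (MSB (e b 0)) # L v2 @ [ysy x, sy (MTT 0)]" "e b 0 \<le> Emax"
    "okm (MSL (code (phi x ! 0)) (e x 1))" "Y1p (MSL (code (phi x ! 0)) (e x 1))"
proof -
  obtain x y r v1 b v2 where a: "x # y # r \<in> R" "y # r = v1 @ b # v2"
      "w = L v1 @ sy (MSB (e b 0)) # L v2 @ [ysy x, sy (MTT 0)]" using assms by (auto simp: YT_def YM_def)
  have "b \<in> V - {H}" using Rx(2,3)[OF a(1)] a(2) by (cases v1) auto
  hence E: "e b 0 \<le> Emax" by (intro e_le) auto
  show ?thesis by (rule that[OF a E ysy_ok[OF a(1)]])
qed

lemma XS_notTHs: assumes "x \<in> V - {H}" "x \<notin> Hset" shows "\<not> (\<exists>x'\<in>V - {H}. H \<in> set (phi x') \<and> e x 0 = e x' 0)"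
  using assms by (auto simp: Hset_def)

lemma mv7: assumes "IC 7 w" "q \<in> Nd" "q \<noteq> 7" "filt_word (em {7,q}) w (ef {7,q})" shows "IE q w"
proof -
  note nb = nb7[OF assms(2,3,4)]
  from assms(1) have "YT w \<or> CS False False (\<lambda>k n m. k \<noteq> KB) w \<or> CS False False (\<lambda>k n m. k = KB \<and> n = 0) w \<or> XS w"
    by (simp add: IC_def IE_def)
  then show ?thesis
  proof (elim disjE)
    assume c: "YT w"
    obtain x y r v1 b v2 where F: "w = L v1 @ sy (MSB (e b 0)) # L v2 @ [ysy x, sy (MTT 0)]" "e b 0 \<le> Emax"
      "okm (MSL (code (phi x ! 0)) (e x 1))" "Y1p (MSL (code (phi x ! 0)) (e x 1))"
      by (rule YT_facts[OF c]) blast+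
    from nb show ?thesis by (elim disjE conjE) (use F c in \<open>simp_all add: fs3\<close>)
  next
    assume c: "CS False False (\<lambda>k n m. k \<noteq> KB) w"
    obtain k \<alpha> \<beta> n m where F: "w = cw k \<alpha> \<beta> n m False False" "n \<le> Emax" "m \<le> Emax"
      "\<And>c. k = KL c \<Longrightarrow> c \<in> code ` V" "k \<noteq> KB"
      "CS False False (\<lambda>_ _ _. True) w" "m = 0 \<Longrightarrow> CS False False (\<lambda>k n m. m = 0) w"
      by (rule CSFF_facts[OF c]) blast+
    from nb show ?thesis by (elim disjE conjE; cases k) (use F c in \<open>simp_all add: fs3\<close>)
  next
    assume c: "CS False False (\<lambda>k n m. k = KB \<and> n = 0) w"
    obtain k \<alpha> \<beta> n m where F: "w = cw k \<alpha> \<beta> n m False False" "n \<le> Emax" "m \<le> Emax"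
      "\<And>c. k = KL c \<Longrightarrow> c \<in> code ` V" "k = KB \<and> n = 0"
      "CS False False (\<lambda>_ _ _. True) w"
      by (rule CSFF_facts[OF c]) blast+
    from nb show ?thesis by (elim disjE conjE) (use F c in \<open>simp_all add: fs3\<close>)
  next
    assume c: "XS w"
    obtain x y r where F: "x # y # r \<in> R" "x \<in> V - {H}" "x \<notin> Hset" "y \<in> V"
      "w = L (y # r) @ [sy (MTT (e x 0))]" "e x 0 \<le> Emax"
      by (rule XS_facts[OF c]) blast+
    note T = XS_notTHs[OF F(2,3)]
    from nb show ?thesis by (elim disjE conjE) (use F c T in \<open>simp_all add: fs3\<close>)
  qed
qed

lemma EN_facts: assumes "EN w"
  obtains x y r i where "w = L (r @ take i (phi x)) @ [sy (MSL (code (phi x ! i)) (e x (Suc i)))]"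
    "okm (MSL (code (phi x ! i)) (e x (Suc i)))" "\<not> Y1p (MSL (code (phi x ! i)) (e x (Suc i)))"
proof -
  obtain x y r i where a: "x # y # r \<in> R" "0 < i" "Suc i < length (phi x)"
    "w = L (r @ take i (phi x)) @ [sy (MSL (code (phi x ! i)) (e x (Suc i)))]" using assms by (auto simp: EN_def)
  have xV: "x \<in> V - {H}" using Rx(1)[OF a(1)] .
  have "phi x ! i \<in> set (phi x)" using a(3) by simp
  hence pV: "phi x ! i \<in> V" using Rx(6)[OF a(1)] by blast
  have E: "e x (Suc i) \<le> Emax" using xV a(3) by (intro e_le) auto
  have nY: "\<not> Y1p (MSL (code (phi x ! i)) (e x (Suc i)))" using xV a(2) by (auto simp: Y1p_def)
  show ?thesis by (rule that[OF a(4)]) (use pV E nY in auto)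
qed

lemma mv8: assumes "IC 8 w" "q \<in> Nd" "q \<noteq> 8" "filt_word (em {8,q}) w (ef {8,q})" shows "IE q w"
proof -
  note nb = nb8[OF assms(2,3,4)]
  from assms(1) have "LX w \<or> XS w \<or> X0 w \<or> Y0 w \<or> EN w" by (simp add: IC_def IE_def)
  then show ?thesis
  proof (elim disjE)
    assume c: "LX w"
    obtain x y r i where F: "x # y # r \<in> R" "Suc i < length (phi x)" "x \<in> V - {H}"
      "w = L (r @ take (Suc i) (phi x)) @ [sy (MTT (e x (Suc i)))]" "e x (Suc i) \<le> Emax"
      by (rule LX_facts[OF c]) blast+
    have T: "\<not> (\<exists>x'\<in>V - {H}. e x (Suc i) = e x' 0)" using F(3) by auto
    from nb show ?thesis by (elim disjE conjE) (use F c T in \<open>simp_all add: fs3\<close>)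
  next
    assume c: "XS w"
    obtain x y r where F: "x # y # r \<in> R" "x \<in> V - {H}" "x \<notin> Hset" "y \<in> V"
      "w = L (y # r) @ [sy (MTT (e x 0))]" "e x 0 \<le> Emax"
      by (rule XS_facts[OF c]) blast+
    have T: "\<not> (\<exists>x'\<in>V - {H}. \<exists>j. 0 < j \<and> j < length (phi x') \<and> e x 0 = e x' j)" using F(2) by auto
    from nb show ?thesis by (elim disjE conjE) (use F c T in \<open>simp_all add: fs3\<close>)
  next
    assume c: "X0 w"
    then obtain u where u: "u \<in> R" "w = L u" by (auto simp: X0_def)
    then obtain x y r where xyr: "u = x # y # r" using R_cons by blast
    have xV: "x \<in> V" using Rx(1) u(1) xyr by auto
    from nb show ?thesis by (elim disjE conjE) (use c u xyr xV in \<open>simp_all add: fs3\<close>)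
  next
    assume c: "Y0 w"
    then obtain x y r where a: "x # y # r \<in> R" "w = L (y # r) @ [ysy x]" by (auto simp: Y0_def)
    note Y = ysy_ok[OF a(1)]
    from nb show ?thesis by (elim disjE conjE) (use c a Y in \<open>simp_all add: fs3\<close>)
  next
    assume c: "EN w"
    obtain x y r i where F: "w = L (r @ take i (phi x)) @ [sy (MSL (code (phi x ! i)) (e x (Suc i)))]"
      "okm (MSL (code (phi x ! i)) (e x (Suc i)))" "\<not> Y1p (MSL (code (phi x ! i)) (e x (Suc i)))"
      by (rule EN_facts[OF c]) blast+
    from nb show ?thesis by (elim disjE conjE) (use F c in \<open>simp_all add: fs3\<close>)
  qed
qed


lemma IE_Nd: "IE p w \<Longrightarrow> p \<in> Nd"
  by (auto simp: IE_def Nd_def split: if_splits)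

lemma IC_Nd: "IC p w \<Longrightarrow> p \<le> 8"
  by (auto simp: IC_def IE_def split: if_splits)

lemma ev_all: "IE p w \<Longrightarrow> \<sigma> \<in> rl p \<Longrightarrow> w' \<in> rule_app \<sigma> (nm p) w \<Longrightarrow> IC p w'"
proof -
  assume a: "IE p w" "\<sigma> \<in> rl p" "w' \<in> rule_app \<sigma> (nm p) w"
  have "p \<le> 8" using a(1) by (auto simp: IE_def split: if_splits)
  then have "p = 0 \<or> p = 1 \<or> p = 2 \<or> p = 3 \<or> p = 4 \<or> p = 5 \<or> p = 6 \<or> p = 7 \<or> p = 8" by presburger
  then show ?thesis using a by (elim disjE) (auto intro: ev0 ev1 ev1[unfolded One_nat_def] ev2 ev3 ev4 ev5 ev6 ev7 ev8)
qed

lemma Ed_mem: "{p,q} \<in> Ed \<Longrightarrow> q \<in> Nd \<and> p \<noteq> q"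
  by (auto simp: Ed_def doubleton_eq_iff)

lemma mv_all: "IC p w \<Longrightarrow> {p,q} \<in> Ed \<Longrightarrow> filt_word (em {p,q}) w (ef {p,q}) \<Longrightarrow> IE q w"
proof -
  assume a: "IC p w" "{p,q} \<in> Ed" "filt_word (em {p,q}) w (ef {p,q})"
  have q: "q \<in> Nd" "q \<noteq> p" using Ed_mem[OF a(2)] by auto
  have "p = 0 \<or> p = 1 \<or> p = 2 \<or> p = 3 \<or> p = 4 \<or> p = 5 \<or> p = 6 \<or> p = 7 \<or> p = 8"
    using IC_Nd[OF a(1)] by presburger
  then show ?thesis using a q mv0 mv1 mv2 mv3 mv4 mv5 mv6 mv7 mv8 by blast
qed

lemma stay_all:
  assumes "IC p w" "\<forall>y. {p,y} \<in> Ed \<longrightarrow> \<not> filt_word (em {p,y}) w (ef {p,y})"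
  shows "IE p w"
proof -
  have E: "{a, b} \<in> Ed" if "a \<in> Nd" "b \<in> Nd" "a \<noteq> b" for a b using that by (auto simp: Ed_def)
  consider "p = 0" | "p = 1" | "p = 8" | "p \<noteq> 0" "p \<noteq> 1" "p \<noteq> 8" by blast
  then show ?thesis
  proof cases
    case 1
    have nf: "\<not> filt_word (em {0,1}) w (ef {0,1})" using assms(2) 1 E[of 0 1] by (auto simp: Nd_def)
    from assms(1) 1 have "X0 w \<or> Y0 w \<or> XM w \<or> YM w" by (simp add: IC_def)
    then show ?thesis
    proof (elim disjE)
      assume "XM w"
      then obtain u1 a u2 where a: "u1 @ a # u2 \<in> R" "w = L u1 @ sy (MSB (e a 0)) # L u2" by (auto simp: XM_def)
      have Ee: "e a 0 \<le> Emax" using Ru(1)[OF a(1)] by (intro e_le) auto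
      have "filt_word (em {0,1}) w (ef {0,1})" using a(2) Ee by (simp add: em_def ef_def doubleton_eq_iff fs2)
      then show ?thesis using nf by blast
    next
      assume "YM w"
      then obtain x y r v1 b v2 where a: "x # y # r \<in> R" "y # r = v1 @ b # v2"
        "w = L v1 @ sy (MSB (e b 0)) # L v2 @ [ysy x]" by (auto simp: YM_def)
      have "b \<in> V - {H}" using Rx(2,3)[OF a(1)] a(2) by (cases v1) auto
      hence Ee: "e b 0 \<le> Emax" by (intro e_le) auto
      have "filt_word (em {0,1}) w (ef {0,1})" using a(3) Ee by (simp add: em_def ef_def doubleton_eq_iff fs2)
      then show ?thesis using nf by blast
    qed (use 1 in \<open>simp_all add: IE_def\<close>)
  next
    case 2
    have nf: "\<not> filt_word (em {1,2}) w (ef {1,2})" using assms(2) 2 E[of 1 2] by (auto simp: Nd_def)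
    from assms(1) 2 have "XJ w \<or> YJ w \<or> ENJ w" by (simp add: IC_def)
    then obtain w0 where "w = w0 @ [sy MJ]" by (auto simp: XJ_def YJ_def ENJ_def)
    then have "filt_word (em {1,2}) w (ef {1,2})" by (simp add: em_def ef_def doubleton_eq_iff fs2)
    then show ?thesis using nf by blast
  next
    case 3
    have nf: "\<not> filt_word (em {8,1}) w (ef {8,1})" using assms(2) 3 E[of 8 1] by (auto simp: Nd_def)
    from assms(1) 3 have "IE 8 w \<or> EN w" by (simp add: IC_def)
    then show ?thesis
    proof
      assume "EN w"
      then obtain x y r i where F: "w = L (r @ take i (phi x)) @ [sy (MSL (code (phi x ! i)) (e x (Suc i)))]"
        "okm (MSL (code (phi x ! i)) (e x (Suc i)))" "\<not> Y1p (MSL (code (phi x ! i)) (e x (Suc i)))"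
        by (rule EN_facts) blast+
      have "filt_word (em {8,1}) w (ef {8,1})" using F by (simp add: em_def ef_def doubleton_eq_iff fs2)
      then show ?thesis using nf by blast
    qed (use 3 in simp)
  next
    case 4
    then show ?thesis using assms(1) by (cases "p = 2") (auto simp: IC_def IE_simps)
  qed
qed

theorem sound: assumes "z \<in> R" shows "run Gam (L z) n 9 = {}"
proof -
  have H: "w \<in> run Gam (L z) n 9 \<Longrightarrow> (if even n then IE 9 w else IC 9 w)" for w
  proof (rule run_inv[of IE Gam "L z" IC])
    show "IE (xin Gam) (L z)" using assms by (simp add: Gam_def IE_def X0_def)
    show "\<And>p w. IE p w \<Longrightarrow> p \<in> nodes Gam" using IE_Nd by (simp add: Gam_def)
    show "\<And>p w \<sigma> w'. IE p w \<Longrightarrow> \<sigma> \<in> rules Gam p \<Longrightarrow> w' \<in> rule_app \<sigma> (nmode Gam p) w \<Longrightarrow> IC p w'"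
      using ev_all by (simp add: Gam_def)
    show "\<And>p w. IC p w \<Longrightarrow> \<forall>y. {p, y} \<in> edges Gam \<longrightarrow> \<not> filt_word (emode Gam {p, y}) w (efilter Gam {p, y}) \<Longrightarrow> IE p w"
      using stay_all by (simp add: Gam_def)
    show "\<And>p q w. IC p w \<Longrightarrow> {p, q} \<in> edges Gam \<Longrightarrow> filt_word (emode Gam {p, q}) w (efilter Gam {p, q}) \<Longrightarrow> IE q w"
      using mv_all by (simp add: Gam_def)
  qed
  show ?thesis
  proof (rule equals0I)
    fix w assume "w \<in> run Gam (L z) n 9"
    from H[OF this] show False by (simp add: IE_def IC_def split: if_splits)
  qed
qed

end

context tagnet begin

lemma R_props:
  assumes z: "z \<in> lists (V - {H})" and nh: "\<not> tag_halts H phi z"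
  shows "S z k \<in> lists (V - {H}) \<and> 2 \<le> length (S z k) \<and> hd (S z k) \<notin> Hset"
proof -
  have nhj: "\<And>j. \<not> halting_word H (S z j)" using nh by (auto simp: tag_halts_def)
  have hd_ok: "hd u \<notin> Hset" if u: "u \<in> lists (V - {H})" "\<not> halting_word H u" "\<not> halting_word H (tag_step phi u)" for u
  proof -
    obtain x y r where xyr: "u = x # y # r" using len2[of u] u(2) by (auto simp: halting_word_def)
    have "H \<notin> set (phi x)" using u(3) xyr by (simp add: halting_word_def tag_step_def)
    then show ?thesis using xyr by (simp add: Hset_def)
  qed
  have L: "S z k \<in> lists (V - {H})" for k
  proof (induction k)
    case 0 then show ?case using z by simp
  next
    case (Suc k)
    obtain x y r where xyr: "S z k = x # y # r" using len2[of "S z k"] nhj[of k] by (auto simp: halting_word_def)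
    have hx: "x \<notin> Hset" using hd_ok[OF Suc.IH nhj[of k]] nhj[of "Suc k"] xyr by simp
    have xV: "x \<in> V - {H}" using Suc.IH xyr by simp
    have "set (phi x) \<subseteq> V - {H}" using nonH_props[OF xV hx] by simp
    moreover have e1: "S z (Suc k) = tag_step phi (x # y # r)" using xyr by simp
    moreover have "tag_step phi (x # y # r) = r @ phi x" by (simp add: tag_step_def)
    moreover have "r \<in> lists (V - {H})" using Suc.IH xyr by simp
    ultimately show ?case by auto
  qed
  have "2 \<le> length (S z k)" using nhj[of k] by (simp add: halting_word_def)
  moreover have "hd (S z k) \<notin> Hset" using hd_ok[OF L nhj[of k]] nhj[of "Suc k"] by simp
  ultimately show ?thesis using L by simp
qed

lemma accept_iff: assumes z: "z \<in> lists (V - {H})"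
  shows "accepting Gam (L z) \<longleftrightarrow> tag_halts H phi z"
proof
  assume h: "tag_halts H phi z"
  from complete[OF z h] obtain n where "run Gam (L z) n 9 \<noteq> {}" by blast
  then show "accepting Gam (L z)" unfolding accepting_iff by (auto simp: Gam_def)
next
  assume a: "accepting Gam (L z)"
  show "tag_halts H phi z"
  proof (rule ccontr)
    assume nh: "\<not> tag_halts H phi z"
    define R where "R = range (S z)"
    interpret tagsound V H phi code R
    proof
      fix u assume "u \<in> R"
      then obtain k where "u = S z k" by (auto simp: R_def)
      then show "u \<in> lists (V - {H}) \<and> 2 \<le> length u \<and> hd u \<notin> Hset" using R_props[OF z nh] by simp
    next
      fix u assume "u \<in> R"
      then obtain k where uk: "u = S z k" by (auto simp: R_def)
      have e: "tag_step phi u = S z (Suc k)" using uk by simp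
      show "tag_step phi u \<in> R" unfolding R_def e by (rule rangeI)
    qed
    have zR: "z \<in> R" unfolding R_def by (rule range_eqI[of _ _ 0]) simp
    from a obtain n where "run Gam (L z) n (xout Gam) \<noteq> {}" unfolding accepting_iff by blast
    then show False using sound[OF zR, of n] by (simp add: Gam_def)
  qed
qed

end

theorem theorem2:
  fixes V :: "'a set" and H :: 'a and phi :: "'a \<Rightarrow> 'a list"
  assumes "tag_system V H phi"
  shows "\<exists>\<Gamma> :: ('a + nat) anepfc.
           wf_anepfc \<Gamma> \<and> complete_graph_size \<Gamma> 10 \<and>
           in_alph \<Gamma> = Inl ` (V - {H}) \<and>
           accepted_lang \<Gamma> = map Inl ` {w \<in> lists (V - {H}). tag_halts H phi w}"
proof -
  have "finite V" using assms by (simp add: tag_system_def)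
  then obtain f :: "'a \<Rightarrow> nat" where f: "inj_on f V"
    using finite_imp_inj_to_nat_seg by blast
  interpret tagnet V H phi f by (unfold_locales) (use assms f in auto)
  have acc: "accepted_lang Gam = map Inl ` {w \<in> lists (V - {H}). tag_halts H phi w}"
  proof -
    have "accepted_lang Gam = {z \<in> lists (Inl ` (V - {H})). accepting Gam z}"
      by (simp add: accepted_lang_def Gam_def)
    also have "\<dots> = {z \<in> map Inl ` lists (V - {H}). accepting Gam z}" by (simp add: lists_image)
    also have "\<dots> = map Inl ` {w \<in> lists (V - {H}). tag_halts H phi w}"
      using accept_iff by auto
    finally show ?thesis .
  qed
  show ?thesis
    by (rule exI[of _ Gam]) (use wf cgs acc in \<open>simp add: Gam_def\<close>)
qed

end
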